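(* Let $k$ be a field of characteristic two and let $k[x,y,z,w]$ be the polynomial ring in four variables over $k$. Consider the following three forms of a $k$-algebra automorphism $T$ of $k[x,y,z,w]$: (i) There is $f \in k[x,y,z]$ such that $T(x)=x$, $T(y)=y$, $T(z)=z$, $T(w)=w+f$. (ii) There are $\xi \in k[x,y]\setminus\{0\}$ and $\eta \in k[x,y,z]$ such that $T(x)=x$, $T(y)=y$, $T(z)=z+\xi$, $T(w)=w+\eta(x,\,y,\,z^2+\xi z)$. (iii) There are $\alpha \in k[x]\setminus\{0\}$, $\beta \in k[x,y]\setminus\{0\}$ and $\gamma \in k[x,y,z,w]$ such that, with $d := \gcd_{k[x,y]}(\alpha,\beta)$, $a := \alpha/d$, $b := \beta/d$ and $f_1 := x$, $f_2 := y^2+\alpha y$, $f_3 := z^2+\beta(x,\,y^2+\alpha y)\,z$, $f_4 := a z + b(x,\,y^2+\alpha y)\,y$, one has $T(x)=x$, $T(y)=y+\alpha(f_1)$, $T(z)=z+\beta(f_1,f_2)$, $T(w)=w+\gamma(f_1,f_2,f_3,f_4)$. Then: (1) Every $k$-algebra automorphism $T$ of $k[x,y,z,w]$ of any one of the forms (i), (ii), (iii) is an involution (i.e. $T^2=\mathrm{id}$). (2) For every triangular automorphism $\tau$ of $k[x,y,z,w]$, the following are equivalent: (2.1) $\tau$ is an involution; (2.2) there exist a $k$-algebra automorphism $\varphi$ of $k[x,y,z,w]$ and a triangular automorphism $T$ of $k[x,y,z,w]$ of one of the forms (i), (ii), (iii) such that $\tau = \varphi\circ T\circ\varphi^{-1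}$.
   Context: A $k$-algebra automorphism $\sigma$ of $k[x_1,\dots,x_n]$ is triangular if $\sigma(x_i)=\lambda_i x_i+\phi_i$ with $\lambda_i\in k\setminus\{0\}$ and $\phi_i\in k[x_1,\dots,x_{i-1}]$ for all $i$; here the variables are ordered $x_1=x$, $x_2=y$, $x_3=z$, $x_4=w$. An involution is an automorphism $\sigma$ with $\sigma^2=\mathrm{id}$. Notation such as $\eta(x,y,z^2+\xi z)$ means substituting the given polynomials for the variables of $\eta$; the gcd in (iii) is taken in $k[x,y]$ (any choice up to a unit). *)

theory Defs
  imports "HOL-Computational_Algebra.Computational_Algebra"
begin

text \<open>The polynomial ring k[x,y,z,w] is represented as the iterated polynomial ring
  ((k[x])[y])[z])[w], i.e. the type 'k poly poly poly poly.
  The variable x is innermost, w outermost.\<close>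

type_synonym 'k R4 = "'k poly poly poly poly"

definition L0 :: "'k::comm_ring_1 \<Rightarrow> 'k R4" where "L0 c = [:[:[:[:c:]:]:]:]"
definition L1 :: "'k::comm_ring_1 poly \<Rightarrow> 'k R4" where "L1 p = [:[:[:p:]:]:]"
definition L2 :: "'k::comm_ring_1 poly poly \<Rightarrow> 'k R4" where "L2 p = [:[:p:]:]"
definition L3 :: "'k::comm_ring_1 poly poly poly \<Rightarrow> 'k R4" where "L3 p = [:p:]"

definition VX :: "'k::comm_ring_1 R4" where "VX = L1 [:0, 1:]"
definition VY :: "'k::comm_ring_1 R4" where "VY = L2 [:0, 1:]"
definition VZ :: "'k::comm_ring_1 R4" where "VZ = L3 [:0, 1:]"
definition VW :: "'k::comm_ring_1 R4" where "VW = [:0, 1:]"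

text \<open>Substitution: subst p a b c d = p(a,b,c,d).\<close>
definition subst4 :: "'k::comm_ring_1 R4 \<Rightarrow> 'k R4 \<Rightarrow> 'k R4 \<Rightarrow> 'k R4 \<Rightarrow> 'k R4 \<Rightarrow> 'k R4" where
  "subst4 p a b c d =
     poly (map_poly (\<lambda>q3. poly (map_poly (\<lambda>q2. poly (map_poly (\<lambda>q1. poly (map_poly L0 q1) a) q2) b) q3) c) p) d"

definition kalg_aut :: "('k::comm_ring_1 R4 \<Rightarrow> 'k R4) \<Rightarrow> bool" where
  "kalg_aut T \<longleftrightarrow>
     (\<forall>p q. T (p + q) = T p + T q) \<and> (\<forall>p q. T (p * q) = T p * T q) \<and>
     (\<forall>c. T (L0 c) = L0 c) \<and> bij T"

definition triangular :: "('k::comm_ring_1 R4 \<Rightarrow> 'k R4) \<Rightarrow> bool" where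
  "triangular \<sigma> \<longleftrightarrow> kalg_aut \<sigma> \<and>
     (\<exists>l1 l2 l3 l4 (p1::'k) (p2::'k poly) (p3::'k poly poly) (p4::'k poly poly poly).
        l1 \<noteq> 0 \<and> l2 \<noteq> 0 \<and> l3 \<noteq> 0 \<and> l4 \<noteq> 0 \<and>
        \<sigma> VX = L0 l1 * VX + L0 p1 \<and> \<sigma> VY = L0 l2 * VY + L1 p2 \<and>
        \<sigma> VZ = L0 l3 * VZ + L2 p3 \<and> \<sigma> VW = L0 l4 * VW + L3 p4)"

definition involution :: "('a \<Rightarrow> 'a) \<Rightarrow> bool" where
  "involution T \<longleftrightarrow> T \<circ> T = id"

definition form_i :: "('k::comm_ring_1 R4 \<Rightarrow> 'k R4) \<Rightarrow> bool" where
  "form_i T \<longleftrightarrow> (\<exists>f :: 'k poly poly poly.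
     T VX = VX \<and> T VY = VY \<and> T VZ = VZ \<and> T VW = VW + L3 f)"

definition form_ii :: "('k::comm_ring_1 R4 \<Rightarrow> 'k R4) \<Rightarrow> bool" where
  "form_ii T \<longleftrightarrow> (\<exists>(\<xi> :: 'k poly poly) (\<eta> :: 'k poly poly poly). \<xi> \<noteq> 0 \<and>
     T VX = VX \<and> T VY = VY \<and> T VZ = VZ + L2 \<xi> \<and>
     T VW = VW + subst4 (L3 \<eta>) VX VY (VZ ^ 2 + L2 \<xi> * VZ) VW)"

text \<open>Form (iii).  d is a gcd of alpha and beta in k[x,y] (any choice up to a unit),
  a = alpha/d and b = beta/d.\<close>
definition is_gcd :: "'a::comm_semiring_1 \<Rightarrow> 'a \<Rightarrow> 'a \<Rightarrow> bool" where
  "is_gcd d p q \<longleftrightarrow> d dvd p \<and> d dvd q \<and> (\<forall>e. e dvd p \<and> e dvd q \<longrightarrow> e dvd d)"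

definition form_iii :: "('k::field R4 \<Rightarrow> 'k R4) \<Rightarrow> bool" where
  "form_iii T \<longleftrightarrow> (\<exists>(\<alpha> :: 'k poly) (\<beta> :: 'k poly poly) (\<gamma> :: 'k R4) d a b.
     \<alpha> \<noteq> 0 \<and> \<beta> \<noteq> 0 \<and> is_gcd d [:\<alpha>:] \<beta> \<and> [:\<alpha>:] = d * a \<and> \<beta> = d * b \<and>
     (let f1 = VX; f2 = VY ^ 2 + L1 \<alpha> * VY;
          f3 = VZ ^ 2 + subst4 (L2 \<beta>) VX f2 VZ VW * VZ;
          f4 = L2 a * VZ + subst4 (L2 b) VX f2 VZ VW * VY
      in T VX = VX \<and> T VY = VY + subst4 (L1 \<alpha>) f1 VY VZ VW \<and>
         T VZ = VZ + subst4 (L2 \<beta>) f1 f2 VZ VW \<and>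
         T VW = VW + subst4 \<gamma> f1 f2 f3 f4))"

end

theory Submission
  imports Defs "HOL-Computational_Algebra.Field_as_Ring"
begin


definition rhom :: "('a::comm_ring_1 \<Rightarrow> 'b::comm_ring_1) \<Rightarrow> bool" where
  "rhom h \<longleftrightarrow> (\<forall>x y. h (x + y) = h x + h y) \<and> (\<forall>x y. h (x * y) = h x * h y) \<and> h 1 = 1"

lemma rhom_add: "rhom h \<Longrightarrow> h (x + y) = h x + h y" by (simp add: rhom_def)
lemma rhom_mult: "rhom h \<Longrightarrow> h (x * y) = h x * h y" by (simp add: rhom_def)
lemma rhom_1: "rhom h \<Longrightarrow> h 1 = 1" by (simp add: rhom_def)
lemma rhom_0: "rhom h \<Longrightarrow> h 0 = 0"
proof -
  assume "rhom h" then have "h (0 + 0) = h 0 + h 0" by (rule rhom_add)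
  then show ?thesis by simp
qed
lemma rhom_uminus: "rhom h \<Longrightarrow> h (- x) = - h x"
proof -
  assume h: "rhom h" then have "h (x + - x) = h x + h (- x)" by (rule rhom_add)
  then show ?thesis using rhom_0[OF h] by (simp add: eq_neg_iff_add_eq_0 add.commute)
qed
lemma rhom_diff: "rhom h \<Longrightarrow> h (x - y) = h x - h y"
  using rhom_add[of h x "- y"] rhom_uminus[of h y] by simp
lemma rhom_power: "rhom h \<Longrightarrow> h (x ^ n) = h x ^ n"
  by (induction n) (simp_all add: rhom_1 rhom_mult)
lemma rhom_comp: "rhom f \<Longrightarrow> rhom g \<Longrightarrow> rhom (f \<circ> g)"
  by (simp add: rhom_def)
lemma rhom_id: "rhom (\<lambda>x. x)" by (simp add: rhom_def)

definition ev :: "('a::zero \<Rightarrow> 'b::comm_ring_1) \<Rightarrow> 'b \<Rightarrow> 'a poly \<Rightarrow> 'b" where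
  "ev h t q = poly (map_poly h q) t"

lemma ev_pCons: "h 0 = 0 \<Longrightarrow> ev h t (pCons a p) = h a + t * ev h t p"
  by (simp add: ev_def map_poly_pCons)
lemma ev_0[simp]: "ev h t 0 = 0" by (simp add: ev_def)
lemma ev_const: "h 0 = 0 \<Longrightarrow> ev h t [:a:] = h a"
  by (simp add: ev_pCons)

lemma ev_add: "rhom h \<Longrightarrow> ev h t (p + q) = ev h t p + ev h t q"
proof (induction p q rule: poly_induct2)
  case 0 then show ?case by simp
next
  case (pCons a p b q)
  then show ?case using rhom_0[OF pCons(2)]
    by (simp add: ev_pCons rhom_add algebra_simps)
qed

lemma ev_smult: "rhom h \<Longrightarrow> ev h t (smult a q) = h a * ev h t q"
  by (induction q) (simp_all add: ev_pCons rhom_0 rhom_mult algebra_simps)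

lemma ev_mult: "rhom h \<Longrightarrow> ev h t (p * q) = ev h t p * ev h t q"
proof (induction p)
  case 0 then show ?case by simp
next
  case (pCons a p)
  have "ev h t (pCons 0 (p * q)) = t * ev h t (p * q)"
    using ev_pCons[where h=h and a=0 and t=t and p="p*q"] rhom_0[OF pCons(3)] by simp
  then show ?case using pCons
    by (simp add: ev_add ev_smult ev_pCons rhom_0 algebra_simps)
qed

lemma ev_1: "rhom h \<Longrightarrow> ev h t 1 = 1"
  using ev_const[of h t 1] by (simp add: rhom_0 rhom_1 one_pCons)

lemma ev_rhom: "rhom h \<Longrightarrow> rhom (ev h t)"
  unfolding rhom_def[of "ev h t"]
  by (simp add: ev_add ev_mult ev_1)

lemma ev_X: "rhom h \<Longrightarrow> ev h t [:0, 1:] = t"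
  by (simp add: ev_pCons rhom_0 rhom_1)

lemma hom_ev:
  assumes H: "rhom H" and h: "rhom h"
  shows "H (ev h t q) = ev (H \<circ> h) (H t) q"
proof (induction q)
  case 0 then show ?case by (simp add: rhom_0[OF H])
next
  case (pCons a q)
  have h0: "h 0 = 0" "(H \<circ> h) 0 = 0" using rhom_0[OF H] rhom_0[OF h] by auto
  show ?case using pCons rhom_0[OF H] by (simp add: ev_pCons h0 rhom_add[OF H] rhom_mult[OF H])
qed

lemma hom_is_ev:
  assumes g: "rhom g"
  shows "g q = ev (\<lambda>a. g [:a:]) (g [:0,1:]) q"
proof (induction q)
  case 0 then show ?case by (simp add: rhom_0[OF g])
next
  case (pCons a q)
  have "pCons a q = [:a:] + [:0,1:] * q" by simp
  then have "g (pCons a q) = g [:a:] + g [:0,1:] * g q"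
    using g by (metis rhom_add rhom_mult)
  moreover have "(\<lambda>a. g [:a:]) 0 = 0" using rhom_0[OF g] by simp
  ultimately show ?case using pCons by (simp add: ev_pCons)
qed

lemma ev_cong: "(\<And>a. h a = h' a) \<Longrightarrow> ev h t q = ev h' t q"
  by (metis ext)


lemma rhom_const: "rhom (\<lambda>c::'a::comm_ring_1. [:c:])"
  by (simp add: rhom_def one_pCons)

lemma rhom_L0: "rhom (L0 :: 'k::comm_ring_1 \<Rightarrow> 'k R4)"
  by (simp add: rhom_def L0_def one_pCons)
lemma rhom_L1: "rhom (L1 :: 'k::comm_ring_1 poly \<Rightarrow> 'k R4)"
  by (simp add: rhom_def L1_def one_pCons)
lemma rhom_L2: "rhom (L2 :: 'k::comm_ring_1 poly poly \<Rightarrow> 'k R4)"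
  by (simp add: rhom_def L2_def one_pCons)
lemma rhom_L3: "rhom (L3 :: 'k::comm_ring_1 poly poly poly \<Rightarrow> 'k R4)"
  by (simp add: rhom_def L3_def one_pCons)

lemma L_inj[simp]: "L0 a = L0 b \<longleftrightarrow> a = b" "L1 p = L1 q \<longleftrightarrow> p = q"
  "L2 p' = L2 q' \<longleftrightarrow> p' = q'" "L3 p'' = L3 q'' \<longleftrightarrow> p'' = q''"
  by (auto simp: L0_def L1_def L2_def L3_def)

lemma L_const: "L1 [:c:] = L0 c" "L2 [:p:] = L1 p" "L3 [:q:] = L2 q"
  by (simp_all add: L0_def L1_def L2_def L3_def)

lemma L_simps:
  "L0 (a + b) = L0 a + L0 b" "L0 (a * b) = L0 a * L0 b" "L0 (a - b) = L0 a - L0 b" "L0 (- a) = - L0 a"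
  "L1 (p + q) = L1 p + L1 q" "L1 (p * q) = L1 p * L1 q" "L1 (p - q) = L1 p - L1 q" "L1 (- p) = - L1 p"
  "L2 (p' + q') = L2 p' + L2 q'" "L2 (p' * q') = L2 p' * L2 q'" "L2 (p' - q') = L2 p' - L2 q'" "L2 (- p') = - L2 p'"
  "L3 (p'' + q'') = L3 p'' + L3 q''" "L3 (p'' * q'') = L3 p'' * L3 q''" "L3 (p'' - q'') = L3 p'' - L3 q''" "L3 (- p'') = - L3 p''"
  "L0 0 = 0" "L1 0 = 0" "L2 0 = 0" "L3 0 = 0" "L0 1 = 1" "L1 1 = 1" "L2 1 = 1" "L3 1 = 1"
  "L0 (a ^ n) = L0 a ^ n" "L1 (p ^ n) = L1 p ^ n" "L2 (p' ^ n) = L2 p' ^ n" "L3 (p'' ^ n) = L3 p'' ^ n"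
  by (simp_all add: rhom_add rhom_mult rhom_diff rhom_uminus rhom_0 rhom_1 rhom_power
      rhom_L0 rhom_L1 rhom_L2 rhom_L3)

definition e1 :: "'k::comm_ring_1 R4 \<Rightarrow> 'k poly \<Rightarrow> 'k R4" where "e1 a = ev L0 a"
definition e2 :: "'k::comm_ring_1 R4 \<Rightarrow> 'k R4 \<Rightarrow> 'k poly poly \<Rightarrow> 'k R4" where "e2 a b = ev (e1 a) b"
definition e3 :: "'k::comm_ring_1 R4 \<Rightarrow> 'k R4 \<Rightarrow> 'k R4 \<Rightarrow> 'k poly poly poly \<Rightarrow> 'k R4" where
  "e3 a b c = ev (e2 a b) c"

lemma ev_def': "ev h t = (\<lambda>q. poly (map_poly h q) t)"
  by (rule ext) (simp add: ev_def)

lemma subst4_ev: "subst4 p a b c d = ev (e3 a b c) d p"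
  by (simp add: subst4_def e3_def e2_def e1_def ev_def')

lemma rhom_e1: "rhom (e1 a)" by (simp add: e1_def ev_rhom rhom_L0)
lemma rhom_e2: "rhom (e2 a b)" by (simp add: e2_def ev_rhom rhom_e1)
lemma rhom_e3: "rhom (e3 a b c)" by (simp add: e3_def ev_rhom rhom_e2)
lemma rhom_subst4: "rhom (\<lambda>p. subst4 p a b c d)"
  by (simp add: subst4_ev ev_rhom rhom_e3)

lemma e_const: "e1 a [:x:] = L0 x" "e2 a b [:p:] = e1 a p" "e3 a b c [:q:] = e2 a b q"
  by (simp_all add: e1_def e2_def e3_def ev_const rhom_0 rhom_L0 rhom_e1 rhom_e2)

lemma e_X: "e1 a [:0,1:] = a" "e2 a b [:0,1:] = b" "e3 a b c [:0,1:] = c"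
  using ev_X[OF rhom_L0, of a] ev_X[OF rhom_e1, of a b] ev_X[OF rhom_e2, of a b c]
  by (simp_all add: e1_def e2_def e3_def)

lemma subst4_L: "subst4 (L3 r) a b c d = e3 a b c r" "subst4 (L2 q) a b c d = e2 a b q"
  "subst4 (L1 e) a b c d = e1 a e" "subst4 (L0 x) a b c d = L0 x"
  by (simp_all add: subst4_ev L3_def L2_def L1_def L0_def ev_const rhom_0 rhom_e3 e_const)

lemma subst4_V: "subst4 VX a b c d = a" "subst4 VY a b c d = b" "subst4 VZ a b c d = c"
  "subst4 VW a b c d = d"
  by (simp_all add: VX_def VY_def VZ_def subst4_L e_X, simp add: VW_def subst4_ev ev_X rhom_e3)

lemma subst4_simps:
  "subst4 (p + q) a b c d = subst4 p a b c d + subst4 q a b c d"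
  "subst4 (p * q) a b c d = subst4 p a b c d * subst4 q a b c d"
  "subst4 (p - q) a b c d = subst4 p a b c d - subst4 q a b c d"
  "subst4 (- p) a b c d = - subst4 p a b c d"
  "subst4 (p ^ n) a b c d = subst4 p a b c d ^ n"
  "subst4 0 a b c d = 0" "subst4 1 a b c d = 1"
  by (simp_all add: rhom_add[OF rhom_subst4] rhom_mult[OF rhom_subst4] rhom_diff[OF rhom_subst4]
     rhom_uminus[OF rhom_subst4] rhom_0[OF rhom_subst4] rhom_1[OF rhom_subst4] rhom_power[OF rhom_subst4])

lemma L1_ev: "L1 q = e1 VX q"
  using hom_is_ev[OF rhom_L1, of q] by (simp add: L_const e1_def VX_def)
lemma L2_ev: "L2 q = e2 VX VY q"
proof -
  have "L2 q = ev (\<lambda>a. L2 [:a:]) (L2 [:0,1:]) q" by (rule hom_is_ev[OF rhom_L2])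
  also have "\<dots> = ev (e1 VX) VY q" by (simp add: L_const VY_def L1_ev)
  finally show ?thesis by (simp add: e2_def)
qed
lemma L3_ev: "L3 q = e3 VX VY VZ q"
proof -
  have "L3 q = ev (\<lambda>a. L3 [:a:]) (L3 [:0,1:]) q" by (rule hom_is_ev[OF rhom_L3])
  also have "\<dots> = ev (e2 VX VY) VZ q" by (simp add: L_const VZ_def L2_ev)
  finally show ?thesis by (simp add: e3_def)
qed
lemma subst4_id: "subst4 p VX VY VZ VW = p"
proof -
  have "p = ev (\<lambda>a. [:a:]) [:0,1:] p" using hom_is_ev[OF rhom_id, of p] by simp
  moreover have e: "(\<lambda>a. [:a:]) = e3 VX VY VZ" by (rule ext) (simp add: L3_ev[symmetric] L3_def)
  moreover have w: "[:0,1:] = (VW :: 'a R4)" by (simp add: VW_def)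
  ultimately show ?thesis unfolding subst4_ev by metis
qed

definition fixk :: "('k::comm_ring_1 R4 \<Rightarrow> 'k R4) \<Rightarrow> bool" where
  "fixk T \<longleftrightarrow> rhom T \<and> (\<forall>c. T (L0 c) = L0 c)"

lemma fixk_subst4: "fixk (\<lambda>p. subst4 p a b c d)"
  by (simp add: fixk_def rhom_subst4 subst4_L)

lemma fixk_comm:
  assumes "fixk T"
  shows "T (subst4 p a b c d) = subst4 p (T a) (T b) (T c) (T d)"
proof -
  have H: "rhom T" and L: "\<And>c. T (L0 c) = L0 c" using assms by (auto simp: fixk_def)
  have 1: "T (e1 a q) = e1 (T a) q" for q
    using hom_ev[OF H rhom_L0, of a q] by (simp add: e1_def o_def L)
  have 2: "T (e2 a b q) = e2 (T a) (T b) q" for q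
    using hom_ev[OF H rhom_e1, of a b q] by (simp add: e2_def o_def 1)
  have 3: "T (e3 a b c q) = e3 (T a) (T b) (T c) q" for q
    using hom_ev[OF H rhom_e2, of a b c q] by (simp add: e3_def o_def 2)
  show ?thesis
    using hom_ev[OF H rhom_e3, of a b c d p] by (simp add: subst4_ev o_def 3)
qed

lemma fixk_gen: "fixk T \<Longrightarrow> T p = subst4 p (T VX) (T VY) (T VZ) (T VW)"
  using fixk_comm[of T p VX VY VZ VW] by (simp add: subst4_id)

lemma fixk_eqI: "fixk T \<Longrightarrow> fixk T' \<Longrightarrow> T VX = T' VX \<Longrightarrow> T VY = T' VY \<Longrightarrow>
   T VZ = T' VZ \<Longrightarrow> T VW = T' VW \<Longrightarrow> T = T'"
  by (rule ext) (metis fixk_gen)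

lemma kalg_aut_fixk: "kalg_aut T \<Longrightarrow> fixk T"
  unfolding kalg_aut_def fixk_def rhom_def by (metis L_simps(21))

lemma fixk_comp: "fixk T \<Longrightarrow> fixk T' \<Longrightarrow> fixk (T \<circ> T')"
  by (simp add: fixk_def rhom_comp)

lemma fixk_id: "fixk id"
  by (simp add: fixk_def rhom_def)

lemma kalg_aut_iff: "kalg_aut T \<longleftrightarrow> fixk T \<and> bij T"
  unfolding kalg_aut_def fixk_def rhom_def by (metis L_simps(21))

lemma subst4_comp:
  "subst4 (subst4 p a b c d) a' b' c' d' =
   subst4 p (subst4 a a' b' c' d') (subst4 b a' b' c' d') (subst4 c a' b' c' d') (subst4 d a' b' c' d')"
  using fixk_comm[OF fixk_subst4] .


lemma deg_le1_eq: "degree (g::'a::comm_ring_1 poly) \<le> 1 \<Longrightarrow> g = [:coeff g 0:] + [:0,1:] * [:coeff g 1:]"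
  by (rule poly_eqI) (auto simp: coeff_pCons coeff_eq_0 split: nat.splits)

lemma pcompose_X: "pcompose [:0,1:] (q::'a::comm_semiring_1 poly) = q"
  by (simp add: pcompose_pCons smult_1_left)

lemma decomp2:
  fixes g :: "'a::idom poly" and c0 c1 :: 'a
  defines "m \<equiv> [:c0, c1, 1:]"
  shows "\<exists>A B. g = pcompose A m + [:0,1:] * pcompose B m"
proof (induction "degree g" arbitrary: g rule: less_induct)
  case less
  show ?case
  proof (cases "degree g \<le> 1")
    case True
    then show ?thesis using deg_le1_eq[OF True]
      by (intro exI[of _ "[:coeff g 0:]"] exI[of _ "[:coeff g 1:]"]) simp
  next
    case False
    have m0: "m \<noteq> 0" and dm: "degree m = 2" and lm: "coeff m (degree m) = 1"
      by (simp_all add: m_def)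
    obtain q r where qr: "pseudo_divmod g m = (q, r)" by (cases "pseudo_divmod g m") auto
    from pseudo_divmod[OF m0 qr] lm dm
    have g: "g = m * q + r" and r: "r = 0 \<or> degree r < 2" by auto
    have dr: "degree r \<le> 1" using r by auto
    have q0: "q \<noteq> 0" using g False dr by auto
    have "degree (m * q) = 2 + degree q" using q0 m0 dm by (simp add: degree_mult_eq)
    moreover have "degree g = degree (m * q)"
    proof -
      have "degree r < degree (m * q)" using dr \<open>degree (m * q) = 2 + degree q\<close> by simp
      then show ?thesis by (simp add: g degree_add_eq_left)
    qed
    ultimately have "degree q < degree g" by simp
    from less(1)[OF this] obtain A B where AB: "q = pcompose A m + [:0,1:] * pcompose B m" by blast
    have mX: "m = pcompose [:0,1:] m" by (simp add: pcompose_X)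
    have "g = pcompose ([:coeff r 0:] + [:0,1:] * A) m + [:0,1:] * pcompose ([:coeff r 1:] + [:0,1:] * B) m"
      apply (subst g, subst deg_le1_eq[OF dr], subst AB)
      apply (simp only: pcompose_add pcompose_mult pcompose_X pcompose_const)
      by (simp add: algebra_simps)
    then show ?thesis by blast
  qed
qed

lemma pcompose_inj:
  fixes A B :: "'a::idom poly"
  assumes "degree m \<ge> 1" "pcompose A m = pcompose B m"
  shows "A = B"
proof -
  have "pcompose (A - B) m = 0" using assms by (simp add: pcompose_diff)
  then have "degree (A - B) * degree m = 0" by (metis degree_0 degree_pcompose)
  then have "degree (A - B) = 0" using assms by simp
  then obtain c where c: "A - B = [:c:]" by (metis degree_eq_zeroE)
  with \<open>pcompose (A - B) m = 0\<close> have "c = 0" by simp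
  with c show ?thesis by simp
qed

lemma decomp2_unique:
  fixes A B :: "'a::idom poly"
  assumes dm: "degree m = 2" and eq: "pcompose A m + [:0,1:] * pcompose B m = 0"
  shows "A = 0 \<and> B = 0"
proof -
  have B: "B = 0"
  proof (rule ccontr)
    assume B0: "B \<noteq> 0"
    have "pcompose B m \<noteq> 0" using B0 pcompose_inj[of m B 0] dm by auto
    then have d1: "degree ([:0,1:] * pcompose B m) = 1 + 2 * degree B"
      using dm by (simp add: degree_mult_eq degree_pcompose)
    have "pcompose A m = - ([:0,1:] * pcompose B m)" using eq eq_neg_iff_add_eq_0 by blast
    then have "degree (pcompose A m) = 1 + 2 * degree B" using d1 by (metis degree_minus)
    moreover have "degree (pcompose A m) = 2 * degree A" using dm by (simp add: degree_pcompose)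
    ultimately show False by presburger
  qed
  then have "pcompose A m = 0" using eq by simp
  then have "A = 0" using pcompose_inj[of m A 0] dm by simp
  with B show ?thesis by simp
qed

lemma two_zero_add: "(2::'a::comm_ring_1) = 0 \<Longrightarrow> x + x = (0::'a)"
  by (metis mult_2 mult_zero_left)

lemma m_shift:
  fixes \<xi> :: "'a::comm_ring_1"
  assumes "(2::'a) = 0"
  shows "pcompose [:0, \<xi>, 1:] [:\<xi>, 1:] = [:0, \<xi>, 1:]"
proof -
  have "pcompose [:0, \<xi>, 1:] [:\<xi>, 1:] = [:\<xi>*\<xi> + \<xi>*\<xi>, \<xi> + (\<xi> + \<xi>), 1:]"
    by (simp add: pcompose_pCons algebra_simps)
  then show ?thesis using two_zero_add[OF assms] by simp
qed

lemma invariant_sq: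
  fixes g :: "'a::idom poly"
  assumes two: "(2::'a) = 0" and xi: "\<xi> \<noteq> 0" and inv: "pcompose g [:\<xi>, 1:] = g"
  shows "\<exists>A. g = pcompose A [:0, \<xi>, 1:]"
proof -
  let ?m = "[:0, \<xi>, 1:]"
  obtain A B where g: "g = pcompose A ?m + [:0,1:] * pcompose B ?m" using decomp2 by blast
  have "pcompose g [:\<xi>, 1:] = pcompose (pcompose A ?m) [:\<xi>, 1:] + pcompose [:0,1:] [:\<xi>, 1:] * pcompose (pcompose B ?m) [:\<xi>, 1:]"
    by (simp only: g pcompose_add pcompose_mult)
  also have "\<dots> = pcompose A ?m + [:\<xi>,1:] * pcompose B ?m"
    by (simp only: pcompose_X m_shift[OF two] flip: pcompose_assoc)
  finally have "pcompose g [:\<xi>, 1:] = pcompose A ?m + [:\<xi>,1:] * pcompose B ?m" .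
  with inv g have "pcompose A ?m + [:\<xi>,1:] * pcompose B ?m = pcompose A ?m + [:0,1:] * pcompose B ?m"
    by simp
  then have "([:\<xi>,1:] - [:0,1:]) * pcompose B ?m = 0" by (simp add: algebra_simps)
  then have "[:\<xi>:] * pcompose B ?m = 0" by simp
  then have "pcompose B ?m = 0" using xi by simp
  then have "B = 0" using pcompose_inj[of ?m B 0] by simp
  with g show ?thesis by auto
qed


typedef 'a fw = "UNIV :: 'a::field set" morphisms fr fa by simp

lemma fr_fa[simp]: "fr (fa x) = x" by (simp add: fa_inverse)
lemma fw_eq_iff: "x = y \<longleftrightarrow> fr x = fr y" by (simp add: fr_inject)

instantiation fw :: (field) field
begin
definition "0 = fa 0"
definition "1 = fa 1"
definition "x + y = fa (fr x + fr y)"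
definition "x - y = fa (fr x - fr y)"
definition "- x = fa (- fr x)"
definition "x * y = fa (fr x * fr y)"
definition "inverse x = fa (inverse (fr x))"
definition "x div y = fa (fr x / fr y)"
instance
  by standard (simp_all add: fw_eq_iff zero_fw_def one_fw_def plus_fw_def minus_fw_def
     uminus_fw_def times_fw_def inverse_fw_def divide_fw_def algebra_simps divide_inverse)
end

lemma fr_ops[simp]: "fr 0 = 0" "fr 1 = 1" "fr (x + y) = fr x + fr y" "fr (x * y) = fr x * fr y"
  by (simp_all add: zero_fw_def one_fw_def plus_fw_def times_fw_def)

lemma fa_ops: "fa 0 = 0" "fa 1 = 1" "fa (x + y) = fa x + fa y" "fa (x * y) = fa x * fa y"
  by (simp_all add: zero_fw_def one_fw_def plus_fw_def times_fw_def)

instantiation fw :: (field)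
  "{unique_euclidean_ring, normalization_euclidean_semiring, normalization_semidom_multiplicative}"
begin
definition [simp]: "normalize_fw = (normalize_field :: 'a fw \<Rightarrow> _)"
definition [simp]: "unit_factor_fw = (unit_factor_field :: 'a fw \<Rightarrow> _)"
definition [simp]: "modulo_fw = (mod_field :: 'a fw \<Rightarrow> _)"
definition [simp]: "euclidean_size_fw = (euclidean_size_field :: 'a fw \<Rightarrow> _)"
definition [simp]: "division_segment (x :: 'a fw) = 1"
instance
  by standard
    (simp_all add: dvd_field_iff field_split_simps split: if_splits)
end

instantiation fw :: (field) euclidean_ring_gcd
begin
definition gcd_fw :: "'a fw \<Rightarrow> 'a fw \<Rightarrow> 'a fw" where
  "gcd_fw = Euclidean_Algorithm.gcd"
definition lcm_fw :: "'a fw \<Rightarrow> 'a fw \<Rightarrow> 'a fw" where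
  "lcm_fw = Euclidean_Algorithm.lcm"
definition Gcd_fw :: "'a fw set \<Rightarrow> 'a fw" where
 "Gcd_fw = Euclidean_Algorithm.Gcd"
definition Lcm_fw :: "'a fw set \<Rightarrow> 'a fw" where
 "Lcm_fw = Euclidean_Algorithm.Lcm"
instance by standard (simp_all add: gcd_fw_def lcm_fw_def Gcd_fw_def Lcm_fw_def)
end

instance fw :: (field) field_gcd ..

lemma rhom_const_G: "rhom (\<lambda>c::'a::comm_ring_1. [:c:])"
  by (simp add: rhom_def one_pCons)

lemma rhom_fa: "rhom fa" by (simp add: rhom_def fa_ops)
lemma rhom_fr: "rhom fr" by (simp add: rhom_def)

lemma map_poly_ev: "h 0 = 0 \<Longrightarrow> map_poly h p = ev (\<lambda>x. [:h x:]) [:0,1:] p"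
  by (induction p) (simp_all add: map_poly_pCons ev_pCons)

lemma rhom_map_poly: "rhom h \<Longrightarrow> rhom (map_poly h)"
proof -
  assume h: "rhom h"
  have "rhom (ev ((\<lambda>x. [:x:]) \<circ> h) [:0,1:])"
    by (rule ev_rhom, rule rhom_comp[OF rhom_const_G h])
  moreover have "map_poly h = ev ((\<lambda>x. [:x:]) \<circ> h) [:0,1:]"
    using map_poly_ev[where h=h, OF rhom_0[OF h]] by (auto simp: o_def)
  ultimately show ?thesis by simp
qed

definition Phi :: "'k::field poly poly \<Rightarrow> 'k fw poly poly" where "Phi = map_poly (map_poly fa)"
definition Psi :: "'k::field fw poly poly \<Rightarrow> 'k poly poly" where "Psi = map_poly (map_poly fr)"

lemma rhom_Phi: "rhom Phi" unfolding Phi_def by (intro rhom_map_poly rhom_fa)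
lemma rhom_Psi: "rhom Psi" unfolding Psi_def by (intro rhom_map_poly rhom_fr)

lemma Psi_Phi[simp]: "Psi (Phi p) = p"
  by (simp add: Psi_def Phi_def map_poly_map_poly fa_ops o_def map_poly_idI)
lemma Phi_Psi[simp]: "Phi (Psi p) = p"
  by (simp add: Psi_def Phi_def map_poly_map_poly fa_ops o_def map_poly_idI fr_inverse)

lemma Phi_dvd: "Phi p dvd Phi q \<longleftrightarrow> p dvd q"
proof
  assume "Phi p dvd Phi q"
  then obtain k where "Phi q = Phi p * k" by (auto elim: dvdE)
  then have "Psi (Phi q) = Psi (Phi p) * Psi k" using rhom_mult[OF rhom_Psi, of "Phi p" k] by simp
  then show "p dvd q" by simp
next
  assume "p dvd q"
  then obtain k where "q = p * k" by (auto elim: dvdE)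
  then show "Phi p dvd Phi q" by (simp add: rhom_mult[OF rhom_Phi])
qed

lemma Psi_dvd: "Psi p dvd Psi q \<longleftrightarrow> p dvd q"
  by (metis Phi_Psi Phi_dvd)

lemma gcd_exists: "\<exists>d. is_gcd d (P::'k::field poly poly) Q"
proof -
  let ?d = "Psi (gcd (Phi P) (Phi Q))"
  have "is_gcd ?d P Q"
    unfolding is_gcd_def
  proof (intro conjI allI impI)
    have "Phi ?d dvd Phi P" by simp
    then show "?d dvd P" by (simp only: Phi_dvd)
    have "Phi ?d dvd Phi Q" by simp
    then show "?d dvd Q" by (simp only: Phi_dvd)
    fix e assume "e dvd P \<and> e dvd Q"
    then have "Phi e dvd Phi P" "Phi e dvd Phi Q" by (simp_all only: Phi_dvd)
    then have "Phi e dvd Phi ?d" by simp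
    then show "e dvd ?d" by (simp only: Phi_dvd)
  qed
  then show ?thesis by blast
qed

lemma coprime_cancel:
  fixes d a b E :: "'k::field poly poly"
  assumes g: "is_gcd d (d * a) (d * b)" and d0: "d \<noteq> 0" and dv: "a dvd b * E"
  shows "a dvd E"
proof -
  have unit: "is_unit e" if "e dvd a" "e dvd b" for e
  proof -
    have "e * d dvd a * d" by (rule mult_dvd_mono[OF that(1) dvd_refl])
    have "e * d dvd b * d" by (rule mult_dvd_mono[OF that(2) dvd_refl])
    note this \<open>e * d dvd a * d\<close>
    then have "e * d dvd d * a" "e * d dvd d * b" by (simp_all only: mult.commute[of _ d])
    then have "e * d dvd d * a \<and> e * d dvd d * b" by blast
    then have "e * d dvd d" using g unfolding is_gcd_def by blast
    then have "e * d dvd 1 * d" by simp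
    then show ?thesis using dvd_times_right_cancel_iff[OF d0] by blast
  qed
  have "coprime (Phi a) (Phi b)"
  proof (rule coprimeI)
    fix c assume "c dvd Phi a" "c dvd Phi b"
    then have "Phi (Psi c) dvd Phi a" "Phi (Psi c) dvd Phi b" by simp_all
    then have "Psi c dvd a" "Psi c dvd b" by (simp_all only: Phi_dvd)
    then have "is_unit (Psi c)" by (rule unit)
    then obtain k where "1 = Psi c * k" by (auto elim: dvdE)
    then have "Phi 1 = Phi (Psi c) * Phi k" using rhom_mult[OF rhom_Phi, of "Psi c" k] by simp
    then have "1 = c * Phi k" using rhom_1[OF rhom_Phi] Phi_Psi[of c] by metis
    then show "is_unit c" using dvdI[of 1 c "Phi k"] by simp
  qed
  moreover have "Phi a dvd Phi b * Phi E"
  proof -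
    have "Phi a dvd Phi (b * E)" using dv by (simp only: Phi_dvd)
    then show ?thesis using rhom_mult[OF rhom_Phi, of b E] by simp
  qed
  ultimately have "Phi a dvd Phi E" by (simp add: coprime_dvd_mult_right_iff)
  then show ?thesis by (simp add: Phi_dvd)
qed


lemma two_poly: "(2::'a::comm_ring_1) = 0 \<Longrightarrow> (2::'a poly) = 0"
  by (simp add: numeral_poly)

lemma pcompose_ev: "pcompose p q = ev (\<lambda>x. [:x:]) q p"
  by (simp add: pcompose_altdef ev_def)

lemma ev_map_poly: "g 0 = 0 \<Longrightarrow> h 0 = 0 \<Longrightarrow> ev h t (map_poly g r) = ev (h \<circ> g) t r"
  by (simp add: ev_def map_poly_map_poly)

lemma e1_L1: "e1 (L1 s) e = L1 (pcompose e s)"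
proof -
  have "L1 (pcompose e s) = ev (L1 \<circ> (\<lambda>x. [:x:])) (L1 s) e"
    by (simp add: pcompose_ev hom_ev[OF rhom_L1 rhom_const])
  also have "L1 \<circ> (\<lambda>x. [:x:]) = L0" by (rule ext) (simp add: L_const)
  finally show ?thesis by (simp add: e1_def)
qed

lemma e1_VX: "e1 VX = L1" by (rule ext) (simp add: L1_ev)

lemma e2_L2: "e2 VX (L2 s) q = L2 (pcompose q s)"
proof -
  have "L2 (pcompose q s) = ev (L2 \<circ> (\<lambda>x. [:x:])) (L2 s) q"
    by (simp add: pcompose_ev hom_ev[OF rhom_L2 rhom_const])
  also have "L2 \<circ> (\<lambda>x. [:x:]) = e1 VX" by (rule ext) (simp add: L_const e1_VX)
  finally show ?thesis by (simp add: e2_def)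
qed

lemma e2_VXVY: "e2 VX VY = L2" by (rule ext) (simp add: L2_ev)

lemma e3_L3:
  "e3 VX (L2 s) (L3 t) r = L3 (pcompose (map_poly (\<lambda>e. pcompose e s) r) t)"
proof -
  have "L3 (pcompose (map_poly (\<lambda>e. pcompose e s) r) t)
      = ev (L3 \<circ> (\<lambda>x. [:x:])) (L3 t) (map_poly (\<lambda>e. pcompose e s) r)"
    by (simp add: pcompose_ev hom_ev[OF rhom_L3 rhom_const])
  also have "\<dots> = ev (L3 \<circ> (\<lambda>x. [:x:]) \<circ> (\<lambda>e. pcompose e s)) (L3 t) r"
    by (rule ev_map_poly) (simp_all add: L_simps)
  also have "L3 \<circ> (\<lambda>x. [:x:]) \<circ> (\<lambda>e. pcompose e s) = e2 VX (L2 s)"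
    by (rule ext) (simp add: L_const e2_L2)
  finally show ?thesis by (simp add: e3_def)
qed

lemma e3_L3': "e3 VX VY (L3 t) r = L3 (pcompose r t)"
proof -
  have "e3 VX VY (L3 t) r = L3 (pcompose (map_poly (\<lambda>e. pcompose e [:0,1:]) r) t)"
    using e3_L3[of "[:0,1:]" t r] unfolding VY_def[symmetric] .
  then show ?thesis by (simp add: map_poly_idI)
qed

definition subr :: "'a::comm_ring_1 set \<Rightarrow> bool" where
  "subr S \<longleftrightarrow> 0 \<in> S \<and> (\<forall>x y. x \<in> S \<longrightarrow> y \<in> S \<longrightarrow> x + y \<in> S \<and> x * y \<in> S)"

lemma ev_closed:
  assumes S: "subr S" and h: "\<And>x. h x \<in> S" "h 0 = 0" and t: "t \<in> S"
  shows "ev h t q \<in> S"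
proof (induction q)
  case 0 then show ?case using S by (simp add: subr_def)
next
  case (pCons a q)
  then show ?case using S h t by (simp add: ev_pCons subr_def)
qed

lemma subr_range: assumes f: "rhom f" shows "subr (range f)"
  unfolding subr_def
proof (intro conjI allI impI)
  show "0 \<in> range f" using rhom_0[OF f] by (metis rangeI)
  fix x y assume "x \<in> range f" "y \<in> range f"
  then obtain a b where "x = f a" "y = f b" by blast
  then show "x + y \<in> range f" "x * y \<in> range f"
    using rhom_add[OF f, of a b] rhom_mult[OF f, of a b] by (metis rangeI)+
qed

lemma L0_in: "L0 c \<in> range L1" "L0 c \<in> range L2" "L0 c \<in> range L3"
proof -
  have "L0 c = L1 [:c:]" "L0 c = L2 [:[:c:]:]" "L0 c = L3 [:[:[:c:]:]:]" by (simp_all add: L_const)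
  then show "L0 c \<in> range L1" "L0 c \<in> range L2" "L0 c \<in> range L3" by (metis rangeI)+
qed
lemma L1_in: "L1 c \<in> range L2" "L1 c \<in> range L3"
proof -
  have "L1 c = L2 [:c:]" "L1 c = L3 [:[:c:]:]" by (simp_all add: L_const)
  then show "L1 c \<in> range L2" "L1 c \<in> range L3" by (metis rangeI)+
qed
lemma L2_in: "L2 c \<in> range L3"
proof -
  have "L2 c = L3 [:c:]" by (simp_all add: L_const)
  then show ?thesis by (metis rangeI)
qed

lemma e1_closed: "a \<in> range L1 \<Longrightarrow> e1 a e \<in> range L1"
  unfolding e1_def by (rule ev_closed[OF subr_range[OF rhom_L1]]) (simp_all add: L0_in L_simps)
lemma e1_closed2: "a \<in> range L2 \<Longrightarrow> e1 a e \<in> range L2"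
  unfolding e1_def by (rule ev_closed[OF subr_range[OF rhom_L2]]) (simp_all add: L0_in L_simps)
lemma e1_closed3: "a \<in> range L3 \<Longrightarrow> e1 a e \<in> range L3"
  unfolding e1_def by (rule ev_closed[OF subr_range[OF rhom_L3]]) (simp_all add: L0_in L_simps)
lemma e2_closed2: "a \<in> range L2 \<Longrightarrow> b \<in> range L2 \<Longrightarrow> e2 a b e \<in> range L2"
  unfolding e2_def by (rule ev_closed[OF subr_range[OF rhom_L2]]) (simp_all add: e1_closed2 rhom_0 rhom_e1)
lemma e2_closed3: "a \<in> range L3 \<Longrightarrow> b \<in> range L3 \<Longrightarrow> e2 a b e \<in> range L3"
  unfolding e2_def by (rule ev_closed[OF subr_range[OF rhom_L3]]) (simp_all add: e1_closed3 rhom_0 rhom_e1)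
lemma e3_closed3: "a \<in> range L3 \<Longrightarrow> b \<in> range L3 \<Longrightarrow> c \<in> range L3 \<Longrightarrow> e3 a b c e \<in> range L3"
  unfolding e3_def by (rule ev_closed[OF subr_range[OF rhom_L3]]) (simp_all add: e2_closed3 rhom_0 rhom_e2)

lemma V_in: "VX \<in> range L1" "VX \<in> range L2" "VX \<in> range L3" "VY \<in> range L2" "VY \<in> range L3"
  "VZ \<in> range L3"
  by (simp_all add: VX_def VY_def VZ_def L1_in L2_in)


lemma K_coeff:
  fixes \<alpha> :: "'k::field poly" and \<beta> d a b e0 e1 :: "'k poly poly"
  assumes two: "(2::'k) = 0" and a0: "\<alpha> \<noteq> 0"
    and g: "is_gcd d [:\<alpha>:] \<beta>" and da: "[:\<alpha>:] = d * a" and db: "\<beta> = d * b"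
    and i1: "pcompose e1 [:\<alpha>,1:] = e1"
    and i0: "e0 + pcompose e0 [:\<alpha>,1:] = pcompose \<beta> [:0,\<alpha>,1:] * e1"
  shows "\<exists>E0 C. e1 = a * pcompose C [:0,\<alpha>,1:] \<and>
     e0 = pcompose E0 [:0,\<alpha>,1:] + [:0,1:] * pcompose b [:0,\<alpha>,1:] * pcompose C [:0,\<alpha>,1:]"
proof -
  let ?f = "[:0,\<alpha>,1:] :: 'k poly poly"
  have two1: "(2::'k poly) = 0" using two by (rule two_poly)
  have two2: "(2::'k poly poly) = 0" using two1 by (rule two_poly)
  obtain E1 where E1: "e1 = pcompose E1 ?f" using invariant_sq[OF two1 a0 i1] by blast
  obtain P Q where PQ: "e0 = pcompose P ?f + [:0,1:] * pcompose Q ?f"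
    using decomp2[of e0 0 \<alpha>] by blast
  have "pcompose e0 [:\<alpha>,1:] = pcompose (pcompose P ?f) [:\<alpha>,1:] + pcompose [:0,1:] [:\<alpha>,1:] * pcompose (pcompose Q ?f) [:\<alpha>,1:]"
    by (simp only: PQ pcompose_add pcompose_mult)
  also have "\<dots> = pcompose P ?f + [:\<alpha>,1:] * pcompose Q ?f"
    by (simp only: pcompose_X m_shift[OF two1] flip: pcompose_assoc)
  finally have se0: "pcompose e0 [:\<alpha>,1:] = pcompose P ?f + [:\<alpha>,1:] * pcompose Q ?f" .
  have "e0 + pcompose e0 [:\<alpha>,1:] = (pcompose P ?f + pcompose P ?f) + ([:0,1:] + [:\<alpha>,1:]) * pcompose Q ?f"
  proof -
    have id: "(u + z * v) + (u + w * v) = (u + u) + (z + w) * v" for u v w z :: "'k poly poly"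
      by (simp add: algebra_simps)
    show ?thesis unfolding se0 by (subst PQ, rule id)
  qed
  also have "pcompose P ?f + pcompose P ?f = 0" by (rule two_zero_add[OF two2])
  also have "[:0,1:] + [:\<alpha>,1:] = [:\<alpha>:]" using two_zero_add[OF two1, of 1] by simp
  finally have "e0 + pcompose e0 [:\<alpha>,1:] = pcompose ([:\<alpha>:] * Q) ?f" by (simp add: pcompose_mult pcompose_smult)
  moreover have "pcompose \<beta> ?f * e1 = pcompose (\<beta> * E1) ?f" by (simp add: E1 pcompose_mult)
  ultimately have "pcompose ([:\<alpha>:] * Q) ?f = pcompose (\<beta> * E1) ?f" using i0 by simp
  then have eq: "[:\<alpha>:] * Q = \<beta> * E1" by (rule pcompose_inj[rotated]) simp
  have d0: "d \<noteq> 0" using da a0 by auto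
  have a00: "a \<noteq> 0" using da a0 by auto
  from eq have "d * (a * Q) = d * (b * E1)" by (simp add: da db algebra_simps)
  then have eq2: "a * Q = b * E1" using d0 by simp
  have "is_gcd d (d * a) (d * b)" using g da db by simp
  moreover have "a dvd b * E1" using eq2 by (metis dvdI)
  ultimately have "a dvd E1" using d0 coprime_cancel by blast
  then obtain C where C: "E1 = a * C" by (auto elim: dvdE)
  with eq2 have "a * Q = a * (b * C)" by (simp add: algebra_simps)
  then have Q: "Q = b * C" using a00 by simp
  have "a dvd [:\<alpha>:]" using da by simp
  then have "degree a \<le> degree [:\<alpha>:]" using a0 by (intro dvd_imp_degree_le) auto
  then have "degree a = 0" by simp
  then obtain a1 where a1: "a = [:a1:]" by (metis degree_eq_zeroE)
  have "e1 = a * pcompose C ?f" by (simp add: E1 C pcompose_mult a1 pcompose_smult)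
  moreover have "e0 = pcompose P ?f + [:0,1:] * pcompose b ?f * pcompose C ?f"
    by (simp add: PQ Q pcompose_mult algebra_simps)
  ultimately show ?thesis by blast
qed


lemma map_poly_pcompose_hom:
  assumes h: "rhom h"
  shows "map_poly h (pcompose p q) = pcompose (map_poly h p) (map_poly h q)"
proof -
  have "map_poly h (pcompose p q) = map_poly h (ev (\<lambda>x. [:x:]) q p)" by (simp add: pcompose_ev)
  also have "\<dots> = ev (map_poly h \<circ> (\<lambda>x. [:x:])) (map_poly h q) p"
    by (rule hom_ev[OF rhom_map_poly[OF h] rhom_const])
  also have "map_poly h \<circ> (\<lambda>x. [:x:]) = (\<lambda>x. [:x:]) \<circ> h"
    by (rule ext) (simp add: rhom_0[OF h] map_poly_pCons)
  also have "ev ((\<lambda>x. [:x:]) \<circ> h) (map_poly h q) p = ev (\<lambda>x. [:x:]) (map_poly h q) (map_poly h p)"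
    by (rule ev_map_poly[symmetric]) (simp_all add: rhom_0[OF h])
  finally show ?thesis by (simp add: pcompose_ev)
qed

lemma rhom_pcomp: "rhom (\<lambda>e. pcompose e s)"
proof -
  have "(\<lambda>e. pcompose e s) = ev (\<lambda>x. [:x:]) s" by (rule ext) (simp add: pcompose_ev)
  then show ?thesis by (simp add: ev_rhom rhom_const)
qed

lemma K_all:
  fixes \<alpha> :: "'k::field poly" and \<beta> d a b :: "'k poly poly" and A A' :: "'k poly poly poly"
  assumes two: "(2::'k) = 0" and a0: "\<alpha> \<noteq> 0"
    and g: "is_gcd d [:\<alpha>:] \<beta>" and da: "[:\<alpha>:] = d * a" and db: "\<beta> = d * b"
  shows "map_poly (\<lambda>e. pcompose e [:\<alpha>,1:]) A' = A' \<Longrightarrow>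
     A + map_poly (\<lambda>e. pcompose e [:\<alpha>,1:]) A = smult (pcompose \<beta> [:0,\<alpha>,1:]) A' \<Longrightarrow>
     \<exists>G0 G1. A' = smult a (map_poly (\<lambda>e. pcompose e [:0,\<alpha>,1:]) G1) \<and>
       A = map_poly (\<lambda>e. pcompose e [:0,\<alpha>,1:]) G0 +
           smult ([:0,1:] * pcompose b [:0,\<alpha>,1:]) (map_poly (\<lambda>e. pcompose e [:0,\<alpha>,1:]) G1)"
proof (induction A A' rule: poly_induct2)
  case 0
  show ?case by (intro exI[of _ 0]) simp
next
  case (pCons x A y A')
  let ?s = "\<lambda>e. pcompose e [:\<alpha>,1:]" and ?g = "\<lambda>e. pcompose e [:0,\<alpha>,1:]"
  have s0: "?s 0 = 0" by simp
  have g0: "?g 0 = 0" by simp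
  from pCons.prems(1) have y: "?s y = y" and A': "map_poly ?s A' = A'"
    by (simp_all add: map_poly_pCons[of ?s, OF s0])
  from pCons.prems(2) have x: "x + ?s x = pcompose \<beta> [:0,\<alpha>,1:] * y"
    and A: "A + map_poly ?s A = smult (pcompose \<beta> [:0,\<alpha>,1:]) A'"
    by (simp_all add: map_poly_pCons[of ?s, OF s0])
  obtain E0 C where EC: "y = a * ?g C" "x = ?g E0 + [:0,1:] * ?g b * ?g C"
    using K_coeff[OF two a0 g da db y x] by blast
  obtain G0 G1 where G: "A' = smult a (map_poly ?g G1)"
    "A = map_poly ?g G0 + smult ([:0,1:] * ?g b) (map_poly ?g G1)"
    using pCons.IH[OF A' A] by blast
  show ?case
    by (intro exI[of _ "pCons E0 G0"] exI[of _ "pCons C G1"])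
       (simp add: map_poly_pCons[of ?g, OF g0] EC G algebra_simps)
qed

lemma pcompose_one[simp]: "pcompose 1 q = 1"
  by (metis one_pCons pcompose_const)

lemma H2_poly:
  fixes \<alpha> :: "'k::field poly" and \<beta> d a b :: "'k poly poly" and r :: "'k poly poly poly"
  assumes two: "(2::'k) = 0" and a0: "\<alpha> \<noteq> 0"
    and g: "is_gcd d [:\<alpha>:] \<beta>" and da: "[:\<alpha>:] = d * a" and db: "\<beta> = d * b"
    and inv: "pcompose (map_poly (\<lambda>e. pcompose e [:\<alpha>,1:]) r) [:pcompose \<beta> [:0,\<alpha>,1:], 1:] = r"
  shows "\<exists>G0 G1. r = pcompose (map_poly (\<lambda>e. pcompose e [:0,\<alpha>,1:]) G0) [:0, pcompose \<beta> [:0,\<alpha>,1:], 1:]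
     + pcompose (map_poly (\<lambda>e. pcompose e [:0,\<alpha>,1:]) G1) [:0, pcompose \<beta> [:0,\<alpha>,1:], 1:]
       * [:[:0,1:] * pcompose b [:0,\<alpha>,1:], a:]"
proof -
  let ?s = "\<lambda>e. pcompose e [:\<alpha>,1:]" and ?g = "\<lambda>e. pcompose e [:0,\<alpha>,1:]"
  let ?B = "pcompose \<beta> [:0,\<alpha>,1:]"
  let ?m = "[:0, ?B, 1:]"
  let ?S = "map_poly ?s"
  have two1: "(2::'k poly) = 0" using two by (rule two_poly)
  have two2: "(2::'k poly poly) = 0" using two1 by (rule two_poly)
  have two3: "(2::'k poly poly poly) = 0" using two2 by (rule two_poly)
  have hs: "rhom ?s" by (rule rhom_pcomp)
  have hS: "rhom ?S" by (rule rhom_map_poly[OF hs])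
  have sB: "?s ?B = ?B" by (simp only: m_shift[OF two1] flip: pcompose_assoc)
  have Sm: "?S ?m = ?m" using sB by (simp add: map_poly_pCons)
  have SX: "?S [:0,1:] = [:0,1:]" by (simp add: map_poly_pCons)
  obtain A A' where AA: "r = pcompose A ?m + [:0,1:] * pcompose A' ?m"
    using decomp2[of r 0 ?B] by blast
  have "?S r = pcompose (?S A) ?m + [:0,1:] * pcompose (?S A') ?m"
    by (simp only: AA rhom_add[OF hS] rhom_mult[OF hS] map_poly_pcompose_hom[OF hs] Sm SX)
  then have "pcompose (?S r) [:?B,1:] = pcompose (pcompose (?S A) ?m) [:?B,1:]
      + pcompose [:0,1:] [:?B,1:] * pcompose (pcompose (?S A') ?m) [:?B,1:]"
    by (simp only: pcompose_add pcompose_mult)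
  also have "\<dots> = pcompose (?S A) ?m + [:?B,1:] * pcompose (?S A') ?m"
    by (simp only: pcompose_X m_shift[OF two2] flip: pcompose_assoc)
  also have "\<dots> = pcompose (?S A + smult ?B (?S A')) ?m + [:0,1:] * pcompose (?S A') ?m"
    by (simp add: pcompose_add pcompose_smult algebra_simps)
  finally have "pcompose (?S A + smult ?B (?S A')) ?m + [:0,1:] * pcompose (?S A') ?m
      = pcompose A ?m + [:0,1:] * pcompose A' ?m" using inv AA by simp
  moreover have id: "u1 + z*v1 = u2 + z*v2 \<Longrightarrow> (u1 - u2) + z*(v1 - v2) = 0" for u1 u2 v1 v2 z :: "'k poly poly poly"
  proof -
    assume h: "u1 + z*v1 = u2 + z*v2"
    have "(u1 - u2) + z*(v1 - v2) = (u1 + z*v1) - (u2 + z*v2)" by (simp add: algebra_simps)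
    with h show ?thesis by simp
  qed
  ultimately have "pcompose (?S A + smult ?B (?S A')) ?m - pcompose A ?m + [:0,1:] * (pcompose (?S A') ?m - pcompose A' ?m) = 0"
    by blast
  then have "pcompose (?S A + smult ?B (?S A') - A) ?m + [:0,1:] * pcompose (?S A' - A') ?m = 0"
    by (simp only: pcompose_diff)
  then have "?S A + smult ?B (?S A') - A = 0 \<and> ?S A' - A' = 0"
    by (intro decomp2_unique[of ?m]) simp_all
  then have h1: "?S A + smult ?B (?S A') - A = 0" and h2: "?S A' - A' = 0" by blast+
  have e1: "?S A' = A'" using h2 by simp
  have e2: "?S A + smult ?B A' = A" using h1 unfolding e1 by simp
  note eqs = e1 e2
  have "A + ?S A = (?S A + smult ?B A') + ?S A" using eqs(2) by simp
  also have "\<dots> = smult ?B A' + (?S A + ?S A)" by (simp add: algebra_simps)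
  also have "?S A + ?S A = 0" by (rule two_zero_add[OF two3])
  finally have eq2: "A + ?S A = smult ?B A'" by simp
  obtain G0 G1 where G: "A' = smult a (map_poly ?g G1)"
       "A = map_poly ?g G0 + smult ([:0,1:] * ?g b) (map_poly ?g G1)"
    using K_all[OF two a0 g da db eqs(1) eq2] by blast
  have idQ: "Q * [:u, a:] = smult u Q + [:0,1:] * smult a Q" for Q :: "'k poly poly poly" and u
    by (simp add: mult_pCons_right)
  have "r = pcompose (map_poly ?g G0) ?m + smult ([:0,1:] * ?g b) (pcompose (map_poly ?g G1) ?m)
     + [:0,1:] * smult a (pcompose (map_poly ?g G1) ?m)"
    unfolding AA G by (simp only: pcompose_add pcompose_smult)
  also have "\<dots> = pcompose (map_poly ?g G0) ?m + pcompose (map_poly ?g G1) ?m * [:[:0,1:] * ?g b, a:]"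
    by (simp only: idQ add.assoc)
  finally have "r = pcompose (map_poly ?g G0) ?m + pcompose (map_poly ?g G1) ?m * [:[:0,1:] * ?g b, a:]" .
  then show ?thesis by blast
qed


lemma two_R4: "(2::'k::comm_ring_1) = 0 \<Longrightarrow> (2::'k R4) = 0"
  by (intro two_poly)+

lemma sq_shift: fixes z c :: "'a::comm_ring_1" shows "(2::'a) = 0 \<Longrightarrow> (z + c)^2 + c * (z + c) = z^2 + c * z"
proof -
  assume two: "(2::'a) = 0"
  have "(z + c)^2 + c * (z + c) = z^2 + c * z + 2 * (z * c + c * c)"
    by (simp add: algebra_simps power2_eq_square)
  then show ?thesis using two by simp
qed

lemma fixk_L: assumes "fixk T" "T VX = VX"
  shows "T (L1 e) = L1 e"
  using fixk_gen[OF assms(1), of "L1 e"] assms(2) by (simp add: subst4_L e1_VX)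

lemma fixk_L2: assumes "fixk T" "T VX = VX" "T VY = VY"
  shows "T (L2 e) = L2 e"
  using fixk_gen[OF assms(1), of "L2 e"] assms(2,3) by (simp add: subst4_L e2_VXVY)

lemma fixk_L3: assumes "fixk T" "T VX = VX" "T VY = VY" "T VZ = VZ"
  shows "T (L3 e) = L3 e"
proof -
  have "T (L3 e) = e3 VX VY VZ e" using fixk_gen[OF assms(1), of "L3 e"] assms(2-4) by (simp add: subst4_L)
  then show ?thesis by (simp only: L3_ev)
qed

lemma invol_gen:
  assumes "fixk T" "T (T VX) = VX" "T (T VY) = VY" "T (T VZ) = VZ" "T (T VW) = VW"
  shows "involution T"
proof -
  have "T \<circ> T = id"
    by (rule fixk_eqI) (simp_all add: assms fixk_comp fixk_id)
  then show ?thesis by (simp add: involution_def)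
qed

lemma char2_add: "(2::'k::comm_ring_1) = 0 \<Longrightarrow> (x::'k R4) + x = 0"
  by (rule two_zero_add[OF two_R4])

lemma part1_i:
  assumes two: "(2::'k::field) = 0" and T: "kalg_aut (T :: 'k R4 \<Rightarrow> 'k R4)" and f: "form_i T"
  shows "involution T"
proof -
  have k: "fixk T" using T by (rule kalg_aut_fixk)
  obtain f where h: "T VX = VX" "T VY = VY" "T VZ = VZ" "T VW = VW + L3 f"
    using f by (auto simp: form_i_def)
  have "T (T VW) = VW + (L3 f + L3 f)"
    using h fixk_L3[OF k h(1-3)] rhom_add[of T] k by (simp add: fixk_def add.assoc)
  then show ?thesis using char2_add[OF two] by (intro invol_gen[OF k]) (simp_all add: h)
qed

lemma part1_ii:
  assumes two: "(2::'k::field) = 0" and T: "kalg_aut (T :: 'k R4 \<Rightarrow> 'k R4)" and f: "form_ii T"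
  shows "involution T"
proof -
  have k: "fixk T" using T by (rule kalg_aut_fixk)
  have hT: "rhom T" using k by (simp add: fixk_def)
  obtain \<xi> \<eta> where h: "T VX = VX" "T VY = VY" "T VZ = VZ + L2 \<xi>"
      "T VW = VW + subst4 (L3 \<eta>) VX VY (VZ ^ 2 + L2 \<xi> * VZ) VW"
    using f by (auto simp: form_ii_def)
  have c2: "\<And>x::'k R4. x + x = 0" using char2_add[OF two] .
  have Lx: "T (L2 \<xi>) = L2 \<xi>" by (rule fixk_L2[OF k h(1,2)])
  have TZ: "T (T VZ) = VZ"
    using h(3) Lx rhom_add[OF hT, of VZ "L2 \<xi>"] c2[of "L2 \<xi>"] by (simp add: add.assoc)
  have TM: "T (VZ ^ 2 + L2 \<xi> * VZ) = VZ ^ 2 + L2 \<xi> * VZ"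
    by (simp add: rhom_add[OF hT] rhom_mult[OF hT] rhom_power[OF hT] h(3) Lx sq_shift[OF two_R4[OF two]])
  have TN: "T (subst4 (L3 \<eta>) VX VY (VZ ^ 2 + L2 \<xi> * VZ) VW) = subst4 (L3 \<eta>) VX VY (VZ ^ 2 + L2 \<xi> * VZ) VW"
    by (simp only: fixk_comm[OF k] h(1,2) TM, simp only: subst4_L)
  have TW: "T (T VW) = VW"
    using h(4) TN rhom_add[OF hT, of VW] c2 by (simp add: add.assoc)
  show ?thesis by (intro invol_gen[OF k]) (simp_all add: h(1,2) TZ TW)
qed

lemma deg0_of_dvd: fixes a :: "'a::idom poly" shows "a dvd [:c:] \<Longrightarrow> c \<noteq> 0 \<Longrightarrow> \<exists>a1. a = [:a1:]"
proof -
  assume "a dvd [:c:]" "c \<noteq> 0"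
  then have "degree a \<le> degree [:c:]" by (intro dvd_imp_degree_le) auto
  then have "degree a = 0" by simp
  then show ?thesis by (metis degree_eq_zeroE)
qed

lemma part1_iii:
  assumes two: "(2::'k::field) = 0" and T: "kalg_aut (T :: 'k R4 \<Rightarrow> 'k R4)" and f: "form_iii T"
  shows "involution T"
proof -
  have k: "fixk T" using T by (rule kalg_aut_fixk)
  have hT: "rhom T" using k by (simp add: fixk_def)
  have c2: "\<And>x::'k R4. x + x = 0" using char2_add[OF two] .
  obtain \<alpha> \<beta> \<gamma> d a b where
    ab: "\<alpha> \<noteq> 0" "\<beta> \<noteq> 0" "is_gcd d [:\<alpha>:] \<beta>" "[:\<alpha>:] = d * a" "\<beta> = d * b"
    and h: "T VX = VX" "T VY = VY + subst4 (L1 \<alpha>) VX VY VZ VW"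
      "T VZ = VZ + subst4 (L2 \<beta>) VX (VY ^ 2 + L1 \<alpha> * VY) VZ VW"
      "T VW = VW + subst4 \<gamma> VX (VY ^ 2 + L1 \<alpha> * VY)
          (VZ ^ 2 + subst4 (L2 \<beta>) VX (VY ^ 2 + L1 \<alpha> * VY) VZ VW * VZ)
          (L2 a * VZ + subst4 (L2 b) VX (VY ^ 2 + L1 \<alpha> * VY) VZ VW * VY)"
    using f unfolding form_iii_def Let_def by blast
  define F2 where "F2 = VY ^ 2 + L1 \<alpha> * VY"
  define Bb where "Bb = subst4 (L2 \<beta>) VX F2 VZ VW"
  define Cb where "Cb = subst4 (L2 b) VX F2 VZ VW"
  define F3 where "F3 = VZ ^ 2 + Bb * VZ"
  define F4 where "F4 = L2 a * VZ + Cb * VY"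
  have hY: "T VY = VY + L1 \<alpha>" using h(2) by (simp add: subst4_L e1_VX)
  have hZ: "T VZ = VZ + Bb" using h(3) by (simp add: Bb_def F2_def)
  have hW: "T VW = VW + subst4 \<gamma> VX F2 F3 F4" using h(4) by (simp add: F2_def F3_def F4_def Bb_def Cb_def)
  have La: "T (L1 \<alpha>) = L1 \<alpha>" by (rule fixk_L[OF k h(1)])
  have TY: "T (T VY) = VY" using hY La rhom_add[OF hT, of VY "L1 \<alpha>"] c2[of "L1 \<alpha>"] by (simp add: add.assoc)
  have TF2: "T F2 = F2"
    by (simp add: F2_def rhom_add[OF hT] rhom_mult[OF hT] rhom_power[OF hT] hY La sq_shift[OF two_R4[OF two]])
  have TB: "T Bb = Bb" unfolding Bb_def
    by (simp only: fixk_comm[OF k] h(1) TF2, simp only: subst4_L)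
  have TC: "T Cb = Cb" unfolding Cb_def
    by (simp only: fixk_comm[OF k] h(1) TF2, simp only: subst4_L)
  have TZ: "T (T VZ) = VZ" using hZ TB rhom_add[OF hT, of VZ Bb] c2[of Bb] by (simp add: add.assoc)
  have TF3: "T F3 = F3"
    by (simp add: F3_def rhom_add[OF hT] rhom_mult[OF hT] rhom_power[OF hT] hZ TB sq_shift[OF two_R4[OF two]])
  obtain d1 where d1: "d = [:d1:]" using deg0_of_dvd[of d \<alpha>] ab(3,1) by (auto simp: is_gcd_def)
  obtain a1 where a1: "a = [:a1:]" using deg0_of_dvd[of a \<alpha>] ab(4,1) by (metis dvd_triv_right)
  have La1: "T (L2 a) = L2 a" using fixk_L[OF k h(1), of a1] by (simp add: a1 L_const)
  have Bbd: "Bb = L2 d * Cb"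
  proof -
    have "Bb = subst4 (L2 d) VX F2 VZ VW * Cb" unfolding Bb_def Cb_def ab(5) L_simps subst4_simps ..
    also have "subst4 (L2 d) VX F2 VZ VW = L2 d" by (simp add: d1 subst4_L e_const e1_VX L_const)
    finally show ?thesis .
  qed
  have Lal: "L1 \<alpha> = L2 d * L2 a" by (simp flip: L_const L_simps add: ab(4))
  have "T F4 = F4 + (L2 a * Bb + Cb * L1 \<alpha>)"
    by (simp add: F4_def rhom_add[OF hT] rhom_mult[OF hT] La1 hZ hY TC algebra_simps)
  also have "L2 a * Bb + Cb * L1 \<alpha> = L2 d * L2 a * Cb + L2 d * L2 a * Cb"
    by (simp add: Bbd Lal algebra_simps)
  finally have TF4: "T F4 = F4" using c2 by simp
  have TG: "T (subst4 \<gamma> VX F2 F3 F4) = subst4 \<gamma> VX F2 F3 F4"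
    by (simp only: fixk_comm[OF k] h(1) TF2 TF3 TF4)
  have TW: "T (T VW) = VW"
    using hW TG rhom_add[OF hT, of VW] c2 by (simp add: add.assoc)
  show ?thesis by (intro invol_gen[OF k]) (simp_all add: h(1) TY TZ TW)
qed

lemma part1:
  assumes two: "(2::'k::field) = 0" and T: "kalg_aut (T :: 'k R4 \<Rightarrow> 'k R4)"
    and f: "form_i T \<or> form_ii T \<or> form_iii T"
  shows "involution T"
  using part1_i[OF two T] part1_ii[OF two T] part1_iii[OF two T] f by blast


definition Conc :: "('k::field R4 \<Rightarrow> 'k R4) \<Rightarrow> bool" where
  "Conc \<tau> \<longleftrightarrow> (\<exists>\<phi> T. kalg_aut \<phi> \<and> triangular T \<and> (form_i T \<or> form_ii T \<or> form_iii T) \<and>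
                     \<tau> = \<phi> \<circ> T \<circ> inv \<phi>)"

lemma kalg_aut_id: "kalg_aut id"
  by (simp add: kalg_aut_iff fixk_id)

lemma conc_self: "triangular T \<Longrightarrow> form_i T \<or> form_ii T \<or> form_iii T \<Longrightarrow> Conc T"
  unfolding Conc_def by (intro exI[of _ id] exI[of _ T]) (simp add: kalg_aut_id)

lemma reduce:
  assumes "kalg_aut \<phi>" "kalg_aut \<psi>" "\<psi> \<circ> \<phi> = id" "\<phi> \<circ> \<psi> = id" "Conc (\<psi> \<circ> \<tau> \<circ> \<phi>)"
  shows "Conc \<tau>"
proof -
  obtain \<phi>2 T where h: "kalg_aut \<phi>2" "triangular T" "form_i T \<or> form_ii T \<or> form_iii T"
    "\<psi> \<circ> \<tau> \<circ> \<phi> = \<phi>2 \<circ> T \<circ> inv \<phi>2"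
    using assms(5) unfolding Conc_def by blast
  have b1: "bij \<phi>" "bij \<phi>2" using assms(1) h(1) by (simp_all add: kalg_aut_iff)
  have ip: "inv \<phi> = \<psi>" using assms(3,4) by (intro inv_equality) (metis comp_apply id_apply)+
  have pw: "\<And>x. \<phi> (\<psi> x) = x" using assms(4) by (metis comp_apply id_apply)
  have "\<tau> = \<phi> \<circ> (\<psi> \<circ> \<tau> \<circ> \<phi>) \<circ> \<psi>" by (simp add: fun_eq_iff pw)
  also have "\<dots> = \<phi> \<circ> (\<phi>2 \<circ> T \<circ> inv \<phi>2) \<circ> \<psi>" by (simp only: h(4))
  also have "\<dots> = (\<phi> \<circ> \<phi>2) \<circ> T \<circ> inv (\<phi> \<circ> \<phi>2)"
    by (simp add: o_inv_distrib b1 ip comp_assoc)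
  finally have "\<tau> = (\<phi> \<circ> \<phi>2) \<circ> T \<circ> inv (\<phi> \<circ> \<phi>2)" .
  moreover have "kalg_aut (\<phi> \<circ> \<phi>2)"
    using assms(1) h(1) by (simp add: kalg_aut_iff fixk_comp bij_comp)
  ultimately show ?thesis using h(2,3) unfolding Conc_def by blast
qed

lemma conc_invol:
  assumes two: "(2::'k::field) = 0" and C: "Conc (\<tau> :: 'k R4 \<Rightarrow> 'k R4)"
  shows "involution \<tau>"
proof -
  obtain \<phi> T where h: "kalg_aut \<phi>" "triangular T" "form_i T \<or> form_ii T \<or> form_iii T"
    "\<tau> = \<phi> \<circ> T \<circ> inv \<phi>"
    using C unfolding Conc_def by blast
  have "kalg_aut T" using h(2) by (simp add: triangular_def)
  then have TT: "T \<circ> T = id" using part1[OF two _ h(3)] by (simp add: involution_def)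
  have b: "bij \<phi>" using h(1) by (simp add: kalg_aut_iff)
  have i1: "inv \<phi> \<circ> \<phi> = id" using b by (simp add: bij_is_inj)
  have i2: "\<phi> \<circ> inv \<phi> = id" using b bij_is_surj surj_iff by blast
  have "\<tau> \<circ> \<tau> = \<phi> \<circ> T \<circ> (inv \<phi> \<circ> \<phi>) \<circ> T \<circ> inv \<phi>" by (simp add: h(4) comp_assoc)
  also have "\<dots> = \<phi> \<circ> (T \<circ> T) \<circ> inv \<phi>" by (simp add: i1 comp_assoc)
  also have "\<dots> = id" by (simp add: TT i2)
  finally show ?thesis by (simp add: involution_def)
qed


lemma lin_poly: "[:c, 1:] = [:0,1:] + [:c:]" by simp
lemma sq_poly: "[:0, c, 1:] = [:0,1:]^2 + [:c:] * [:0,1:]" by (simp add: power2_eq_square)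

lemma Lpc: "L1 [:c,1:] = VX + L0 c" "L2 [:p,1:] = VY + L1 p" "L3 [:q,1:] = VZ + L2 q"
proof -
  show "L1 [:c,1:] = VX + L0 c" by (subst lin_poly) (simp only: L_simps L_const VX_def)
  show "L2 [:p,1:] = VY + L1 p" by (subst lin_poly) (simp only: L_simps L_const VY_def)
  show "L3 [:q,1:] = VZ + L2 q" by (subst lin_poly) (simp only: L_simps L_const VZ_def)
qed

lemma Lsq: "L2 [:0,p,1:] = VY^2 + L1 p * VY" "L3 [:0,q,1:] = VZ^2 + L2 q * VZ"
proof -
  show "L2 [:0,p,1:] = VY^2 + L1 p * VY" by (subst sq_poly) (simp only: L_simps L_const VY_def)
  show "L3 [:0,q,1:] = VZ^2 + L2 q * VZ" by (subst sq_poly) (simp only: L_simps L_const VZ_def)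
qed

lemma tri_intro:
  assumes "kalg_aut \<tau>" "\<tau> VX = VX + L0 p1" "\<tau> VY = VY + L1 p2" "\<tau> VZ = VZ + L2 p3" "\<tau> VW = VW + L3 p4"
  shows "triangular \<tau>"
  unfolding triangular_def using assms
  by (intro conjI exI[of _ 1] exI[of _ p1] exI[of _ p2] exI[of _ p3] exI[of _ p4]) (simp_all add: L_simps)

lemma char2_eq: "(2::'a::comm_ring_1) = 0 \<Longrightarrow> x + y = 0 \<Longrightarrow> y = (x::'a)"
proof -
  assume two: "(2::'a) = 0" and s: "x + y = 0"
  have "y = (x + y) - x" by simp
  also have "\<dots> = - x" using s by simp
  also have "- x = x" using two_zero_add[OF two, of x] by (simp add: eq_neg_iff_add_eq_0)
  finally show ?thesis .
qed

lemma invol_app: "involution \<tau> \<Longrightarrow> \<tau> (\<tau> x) = x"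
  unfolding involution_def by (drule fun_cong[of _ _ x]) simp

lemma caseB:
  assumes two: "(2::'k::field) = 0" and T: "kalg_aut (\<tau> :: 'k R4 \<Rightarrow> 'k R4)" and inv: "involution \<tau>"
    and h: "\<tau> VX = VX" "\<tau> VY = VY" "\<tau> VZ = VZ + L2 q" "\<tau> VW = VW + L3 r" and q0: "q \<noteq> 0"
  shows "Conc \<tau>"
proof -
  have k: "fixk \<tau>" using T by (rule kalg_aut_fixk)
  have hT: "rhom \<tau>" using k by (simp add: fixk_def)
  have two2: "(2::'k poly poly) = 0" using two_poly[OF two_poly[OF two]] .
  have two3: "(2::'k poly poly poly) = 0" using two_poly[OF two2] .
  have tr: "\<tau> (L3 r) = L3 (pcompose r [:q,1:])"
    using fixk_gen[OF k, of "L3 r"] h by (simp add: subst4_L flip: Lpc e3_L3')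
  have "VW = \<tau> (\<tau> VW)" using invol_app[OF inv] by simp
  also have "\<dots> = VW + L3 r + L3 (pcompose r [:q,1:])" using h(4) tr rhom_add[OF hT, of VW "L3 r"] by simp
  finally have "L3 (r + pcompose r [:q,1:]) = 0" by (simp add: L_simps add.assoc)
  then have "L3 (r + pcompose r [:q,1:]) = L3 0" by (simp only: L_simps)
  then have "r + pcompose r [:q,1:] = 0" by (simp only: L_inj)
  then have ri: "pcompose r [:q,1:] = r" by (rule char2_eq[OF two3])
  obtain \<eta> where eta: "r = pcompose \<eta> [:0,q,1:]" using invariant_sq[OF two2 q0 ri] by blast
  have "subst4 (L3 \<eta>) VX VY (VZ ^ 2 + L2 q * VZ) VW = L3 r"
    by (simp add: subst4_L eta e3_L3' flip: Lsq)
  then have "form_ii \<tau>" unfolding form_ii_def using h q0 by (intro exI[of _ q] exI[of _ \<eta>]) simp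
  moreover have "triangular \<tau>" by (rule tri_intro[OF T, of 0 0 q r]) (simp_all add: h L_simps)
  ultimately show ?thesis using conc_self by blast
qed

lemma caseD:
  assumes two: "(2::'k::field) = 0" and T: "kalg_aut (\<tau> :: 'k R4 \<Rightarrow> 'k R4)" and inv: "involution \<tau>"
    and h: "\<tau> VX = VX" "\<tau> VY = VY + L1 p" "\<tau> VZ = VZ + L2 q" "\<tau> VW = VW + L3 r"
    and p0: "p \<noteq> 0" and q0: "q \<noteq> 0"
  shows "Conc \<tau>"
proof -
  have k: "fixk \<tau>" using T by (rule kalg_aut_fixk)
  have hT: "rhom \<tau>" using k by (simp add: fixk_def)
  have two1: "(2::'k poly) = 0" using two_poly[OF two] .
  have two2: "(2::'k poly poly) = 0" using two_poly[OF two1] .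
  have two3: "(2::'k poly poly poly) = 0" using two_poly[OF two2] .
  let ?f = "[:0,p,1:] :: 'k poly poly"
  have tq: "\<tau> (L2 q) = L2 (pcompose q [:p,1:])"
    using fixk_gen[OF k, of "L2 q"] h by (simp add: subst4_L flip: Lpc e2_L2)
  have "VZ = \<tau> (\<tau> VZ)" using invol_app[OF inv] by simp
  also have "\<dots> = VZ + L2 q + L2 (pcompose q [:p,1:])" using h(3) tq rhom_add[OF hT, of VZ "L2 q"] by simp
  finally have "L2 (q + pcompose q [:p,1:]) = L2 0" by (simp add: L_simps add.assoc)
  then have "q + pcompose q [:p,1:] = 0" by (simp only: L_inj)
  then have qi: "pcompose q [:p,1:] = q" by (rule char2_eq[OF two2])
  obtain \<beta> where bq: "q = pcompose \<beta> ?f" using invariant_sq[OF two1 p0 qi] by blast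
  have b0: "\<beta> \<noteq> 0" using bq q0 by auto
  have tr: "\<tau> (L3 r) = L3 (pcompose (map_poly (\<lambda>e. pcompose e [:p,1:]) r) [:q,1:])"
    using fixk_gen[OF k, of "L3 r"] h by (simp add: subst4_L flip: Lpc e3_L3)
  have "VW = \<tau> (\<tau> VW)" using invol_app[OF inv] by simp
  also have "\<dots> = VW + L3 r + L3 (pcompose (map_poly (\<lambda>e. pcompose e [:p,1:]) r) [:q,1:])"
    using h(4) tr rhom_add[OF hT, of VW "L3 r"] by simp
  finally have "L3 (r + pcompose (map_poly (\<lambda>e. pcompose e [:p,1:]) r) [:q,1:]) = L3 0"
    by (simp add: L_simps add.assoc)
  then have "r + pcompose (map_poly (\<lambda>e. pcompose e [:p,1:]) r) [:q,1:] = 0" by (simp only: L_inj)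
  then have ri: "pcompose (map_poly (\<lambda>e. pcompose e [:p,1:]) r) [:pcompose \<beta> ?f,1:] = r"
    unfolding bq by (rule char2_eq[OF two3])
  obtain d where g: "is_gcd d [:p:] \<beta>" using gcd_exists by blast
  obtain a where da: "[:p:] = d * a" using g by (auto simp: is_gcd_def elim: dvdE)
  obtain b where db: "\<beta> = d * b" using g by (auto simp: is_gcd_def elim: dvdE)
  obtain G0 G1 where G: "r = pcompose (map_poly (\<lambda>e. pcompose e ?f) G0) [:0, pcompose \<beta> ?f, 1:]
     + pcompose (map_poly (\<lambda>e. pcompose e ?f) G1) [:0, pcompose \<beta> ?f, 1:]
       * [:[:0,1:] * pcompose b ?f, a:]"
    using H2_poly[OF two p0 g da db ri] by blast
  have EF2: "VY ^ 2 + L1 p * VY = L2 ?f" by (simp add: Lsq)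
  have EB: "subst4 (L2 \<beta>) VX (L2 ?f) VZ VW = L2 q" by (simp add: subst4_L e2_L2 bq)
  have EF3: "VZ ^ 2 + L2 q * VZ = L3 [:0, pcompose \<beta> ?f, 1:]" by (simp add: Lsq bq)
  have EF4: "L2 a * VZ + subst4 (L2 b) VX (L2 ?f) VZ VW * VY = L3 [:[:0,1:] * pcompose b ?f, a:]"
  proof -
    have "[:[:0,1:] * pcompose b ?f, a:] = [:[:0,1:]:] * [:pcompose b ?f:] + [:0,1:] * [:a:]" by simp
    then have "L3 [:[:0,1:] * pcompose b ?f, a:] = VY * L2 (pcompose b ?f) + VZ * L2 a"
      by (simp only: L_simps L_const VY_def VZ_def)
    then show ?thesis by (simp add: subst4_L e2_L2 algebra_simps)
  qed
  have EG: "subst4 (L3 G0 + L3 G1 * VW) VX (L2 ?f) (L3 [:0, pcompose \<beta> ?f, 1:]) (L3 [:[:0,1:] * pcompose b ?f, a:]) = L3 r"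
    by (simp only: subst4_simps subst4_L subst4_V e3_L3, subst G, simp only: L_simps)
  have "form_iii \<tau>"
    unfolding form_iii_def Let_def
    apply (rule exI[of _ p], rule exI[of _ \<beta>], rule exI[of _ "L3 G0 + L3 G1 * VW"],
        rule exI[of _ d], rule exI[of _ a], rule exI[of _ b])
    apply (simp only: EF2 EB EF3 EF4 EG)
    using p0 b0 g da db h by (simp add: subst4_L e1_VX)
  moreover have "triangular \<tau>" by (rule tri_intro[OF T, of 0 p q r]) (simp_all add: h L_simps)
  ultimately show ?thesis using conc_self by blast
qed


definition Sw :: "'k::field R4 \<Rightarrow> 'k R4" where "Sw P = subst4 P VX VZ VY VW"

lemma fixk_Sw: "fixk Sw"
  unfolding Sw_def[abs_def] by (rule fixk_subst4)

lemma Sw_V: "Sw VX = VX" "Sw VY = VZ" "Sw VZ = VY" "Sw VW = VW"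
  by (simp_all add: Sw_def subst4_V)

lemma Sw_Sw: "Sw \<circ> Sw = id"
  by (rule fixk_eqI) (simp_all add: fixk_comp fixk_Sw fixk_id Sw_V)

lemma kalg_Sw: "kalg_aut Sw"
  unfolding kalg_aut_iff using fixk_Sw Sw_Sw o_bij by blast

lemma caseC:
  assumes two: "(2::'k::field) = 0" and T: "kalg_aut (\<tau> :: 'k R4 \<Rightarrow> 'k R4)" and inv: "involution \<tau>"
    and h: "\<tau> VX = VX" "\<tau> VY = VY + L1 p" "\<tau> VZ = VZ" "\<tau> VW = VW + L3 r" and p0: "p \<noteq> 0"
  shows "Conc \<tau>"
proof -
  let ?t = "Sw \<circ> \<tau> \<circ> Sw"
  have kS: "fixk (Sw :: 'k R4 \<Rightarrow> 'k R4)" by (rule fixk_Sw)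
  have hS: "rhom (Sw :: 'k R4 \<Rightarrow> 'k R4)" using kS by (simp add: fixk_def)
  have T1: "kalg_aut ?t" using T kalg_Sw unfolding kalg_aut_iff by (meson fixk_comp bij_comp)
  have SS: "\<And>x::'k R4. Sw (Sw x) = x" using Sw_Sw by (metis comp_apply id_apply)
  have inv1: "involution ?t" using invol_app[OF inv] by (simp add: involution_def fun_eq_iff SS)
  have "e3 VX VZ VY r \<in> range L3" by (rule e3_closed3) (simp_all add: V_in)
  then obtain r' where r': "e3 VX VZ VY r = L3 r'" by blast
  have h1: "?t VX = VX" "?t VY = VY" "?t VZ = VZ + L2 [:p:]" "?t VW = VW + L3 r'"
    using h by (simp_all add: Sw_V rhom_add[OF hS] L_const, simp_all add: Sw_def subst4_L e1_VX r')
  have "Conc ?t" by (rule caseB[OF two T1 inv1 h1]) (simp add: p0)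
  then show ?thesis by (rule reduce[OF kalg_Sw kalg_Sw Sw_Sw Sw_Sw])
qed

lemma classify0:
  assumes two: "(2::'k::field) = 0" and T: "kalg_aut (\<tau> :: 'k R4 \<Rightarrow> 'k R4)" and inv: "involution \<tau>"
    and h: "\<tau> VX = VX" "\<tau> VY = VY + L1 p" "\<tau> VZ = VZ + L2 q" "\<tau> VW = VW + L3 r"
  shows "Conc \<tau>"
proof (cases "p = 0")
  case True
  show ?thesis
  proof (cases "q = 0")
    case True
    have "form_i \<tau>" unfolding form_i_def using h \<open>p = 0\<close> True by (simp add: L_simps)
    moreover have "triangular \<tau>" by (rule tri_intro[OF T, of 0 p q r]) (simp_all add: h L_simps)
    ultimately show ?thesis using conc_self by blast
  next
    case False
    show ?thesis by (rule caseB[OF two T inv _ _ h(3,4) False]) (simp_all add: h \<open>p = 0\<close> L_simps)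
  qed
next
  case False
  show ?thesis
  proof (cases "q = 0")
    case True
    show ?thesis by (rule caseC[OF two T inv h(1,2) _ h(4) False]) (simp add: h True L_simps)
  next
    case q: False
    show ?thesis by (rule caseD[OF two T inv h False q])
  qed
qed


lemma range_add: "rhom f \<Longrightarrow> x \<in> range f \<Longrightarrow> y \<in> range f \<Longrightarrow> x + y \<in> range f"
  using subr_range unfolding subr_def by blast

lemma cNZ:
  assumes two: "(2::'k::field) = 0" and T: "kalg_aut (\<tau> :: 'k R4 \<Rightarrow> 'k R4)" and inv: "involution \<tau>"
    and h: "\<tau> VX = VX + L0 c" "\<tau> VY = VY + L1 p" "\<tau> VZ = VZ + L2 q" "\<tau> VW = VW + L3 r"
    and c0: "c \<noteq> 0"
  shows "Conc \<tau>"
proof -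
  have k: "fixk \<tau>" using T by (rule kalg_aut_fixk)
  have hT: "rhom \<tau>" using k by (simp add: fixk_def)
  have two1: "(2::'k poly) = 0" using two_poly[OF two] .
  have c2: "\<And>x::'k R4. x + x = 0" using char2_add[OF two] .
  have tp: "\<tau> (L1 e) = L1 (pcompose e [:c,1:])" for e
    using fixk_gen[OF k, of "L1 e"] h by (simp add: subst4_L flip: Lpc e1_L1)
  have "VY = \<tau> (\<tau> VY)" using invol_app[OF inv] by simp
  also have "\<dots> = VY + L1 p + L1 (pcompose p [:c,1:])" using h(2) tp rhom_add[OF hT, of VY "L1 p"] by simp
  finally have "L1 (p + pcompose p [:c,1:]) = L1 0" by (simp add: L_simps add.assoc)
  then have "p + pcompose p [:c,1:] = 0" by (simp only: L_inj)
  then have pi: "pcompose p [:c,1:] = p" by (rule char2_eq[OF two1])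
  define s where "s = smult (inverse c) (p * [:0,1:])"
  have ss: "pcompose s [:c,1:] = s + p"
  proof -
    have "pcompose s [:c,1:] = smult (inverse c) (pcompose p [:c,1:] * pcompose [:0,1:] [:c,1:])"
      unfolding s_def by (simp only: pcompose_smult pcompose_mult)
    also have "\<dots> = smult (inverse c) (p * [:c,1:])" by (simp only: pi pcompose_X)
    also have "p * [:c,1:] = smult c p + p * [:0,1:]" by (simp add: mult_pCons_right)
    finally show ?thesis using c0 by (simp add: s_def smult_add_right)
  qed
  define u1 where "u1 = VY + L1 s"
  define t where "t = e1 VY s"
  define \<phi> where "\<phi> = (\<lambda>P. subst4 P u1 VX VZ VW)"
  define \<psi> where "\<psi> = (\<lambda>P. subst4 P VY (VX + t) VZ VW)"
  have k\<phi>: "fixk \<phi>" unfolding \<phi>_def by (rule fixk_subst4)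
  have k\<psi>: "fixk \<psi>" unfolding \<psi>_def by (rule fixk_subst4)
  have h\<psi>: "rhom \<psi>" using k\<psi> by (simp add: fixk_def)
  have h\<phi>: "rhom \<phi>" using k\<phi> by (simp add: fixk_def)
  have \<psi>u: "\<psi> u1 = VX"
  proof -
    have "\<psi> u1 = \<psi> VY + \<psi> (L1 s)" unfolding u1_def by (rule rhom_add[OF h\<psi>])
    also have "\<dots> = VX + (t + t)" by (simp add: \<psi>_def subst4_V subst4_L t_def add.assoc)
    finally show ?thesis using c2[of t] by simp
  qed
  have \<phi>t: "\<phi> t = L1 s"
  proof -
    have "t = subst4 (L1 s) VY VY VZ VW" by (simp add: t_def subst4_L)
    then have "\<phi> t = subst4 (L1 s) (\<phi> VY) (\<phi> VY) (\<phi> VZ) (\<phi> VW)" by (simp add: fixk_comm[OF k\<phi>])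
    then show ?thesis by (simp add: \<phi>_def subst4_V subst4_L e1_VX)
  qed
  have \<phi>X: "\<phi> VX = u1" by (simp add: \<phi>_def subst4_V)
  have \<psi>\<phi>: "\<psi> \<circ> \<phi> = id"
    by (rule fixk_eqI) (simp_all add: fixk_comp k\<phi> k\<psi> fixk_id \<psi>u \<phi>X, simp_all add: \<phi>_def \<psi>_def subst4_V)
  have \<phi>\<psi>: "\<phi> \<circ> \<psi> = id"
  proof (rule fixk_eqI)
    show "(\<phi> \<circ> \<psi>) VY = id VY"
      using rhom_add[OF h\<phi>, of VX t] \<phi>t c2[of "L1 s"]
      by (simp add: \<psi>_def subst4_V, simp add: \<phi>_def subst4_V u1_def add.assoc)
  qed (simp_all add: fixk_comp k\<phi> k\<psi> fixk_id, simp_all add: \<phi>_def \<psi>_def subst4_V)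
  have ka\<phi>: "kalg_aut \<phi>" using k\<phi> \<psi>\<phi> \<phi>\<psi> o_bij kalg_aut_iff by blast
  have ka\<psi>: "kalg_aut \<psi>" using k\<psi> \<psi>\<phi> \<phi>\<psi> o_bij kalg_aut_iff by blast
  let ?t = "\<psi> \<circ> \<tau> \<circ> \<phi>"
  have T1: "kalg_aut ?t" using T ka\<phi> ka\<psi> unfolding kalg_aut_iff by (meson fixk_comp bij_comp)
  have pw1: "\<And>x. \<psi> (\<phi> x) = x" using \<psi>\<phi> by (metis comp_apply id_apply)
  have pw2: "\<And>x. \<phi> (\<psi> x) = x" using \<phi>\<psi> by (metis comp_apply id_apply)
  have inv1: "involution ?t" using invol_app[OF inv] by (simp add: involution_def fun_eq_iff pw1 pw2)
  have \<tau>u: "\<tau> u1 = u1"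
  proof -
    have "\<tau> u1 = VY + L1 p + L1 (s + p)" using h(2) tp[of s] ss rhom_add[OF hT, of VY "L1 s"]
      by (simp add: u1_def)
    also have "\<dots> = VY + L1 s + (L1 p + L1 p)" by (simp add: L_simps algebra_simps)
    finally show ?thesis using c2 by (simp add: u1_def)
  qed
  have tin2: "t \<in> range L2" unfolding t_def by (rule e1_closed2) (simp add: V_in)
  have tin3: "t \<in> range L3" unfolding t_def by (rule e1_closed3) (simp add: V_in)
  have "e2 VY (VX + t) q \<in> range L2"
    by (rule e2_closed2) (simp_all add: V_in range_add[OF rhom_L2] tin2)
  then obtain q' where q': "e2 VY (VX + t) q = L2 q'" by blast
  have "e3 VY (VX + t) VZ r \<in> range L3"
    by (rule e3_closed3) (simp_all add: V_in range_add[OF rhom_L3] tin3)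
  then obtain r' where r': "e3 VY (VX + t) VZ r = L3 r'" by blast
  have h1: "?t VX = VX" "?t VY = VY + L1 [:c:]" "?t VZ = VZ + L2 q'" "?t VW = VW + L3 r'"
  proof -
    show "?t VX = VX" using \<tau>u \<psi>u by (simp add: \<phi>_def subst4_V)
    show "?t VY = VY + L1 [:c:]" using h(1) rhom_add[OF h\<psi>, of VX "L0 c"]
      by (simp add: \<phi>_def \<psi>_def subst4_V subst4_L L_const)
    show "?t VZ = VZ + L2 q'" using h(3) rhom_add[OF h\<psi>, of VZ "L2 q"] q'
      by (simp add: \<phi>_def \<psi>_def subst4_V subst4_L)
    show "?t VW = VW + L3 r'" using h(4) rhom_add[OF h\<psi>, of VW "L3 r"] r'
      by (simp add: \<phi>_def \<psi>_def subst4_V subst4_L)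
  qed
  have "Conc ?t" by (rule classify0[OF two T1 inv1 h1])
  then show ?thesis by (rule reduce[OF ka\<phi> ka\<psi> \<psi>\<phi> \<phi>\<psi>])
qed


lemma smult_const: "smult c p = [:c:] * p" by simp

lemma L_smult: "L1 (smult c p) = L0 c * L1 p" "L2 (smult c' q) = L1 c' * L2 q" "L3 (smult c'' r) = L2 c'' * L3 r"
  by (simp_all only: smult_const L_simps L_const)

lemma lx: assumes "L0 u * VX + L0 v = (VX :: 'k::comm_ring_1 R4)" shows "u = 1"
proof -
  have "L1 [:v, u:] = L1 [:0, 1:]"
  proof -
    have "[:v, u:] = [:v:] + [:0,1:] * [:u:]" by simp
    then have "L1 [:v, u:] = L0 u * VX + L0 v" by (simp only: L_simps L_const VX_def algebra_simps)
    then show ?thesis using assms by (simp add: VX_def)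
  qed
  then show ?thesis by simp
qed

lemma ly: assumes "L0 u * VY + L1 w = (VY :: 'k::comm_ring_1 R4)" shows "u = 1"
proof -
  have "[:w, [:u:]:] = [:w:] + [:0,1:] * [:[:u:]:]" by simp
  then have "L2 [:w, [:u:]:] = L0 u * VY + L1 w" by (simp only: L_simps L_const VY_def algebra_simps)
  then have "L2 [:w, [:u:]:] = L2 [:0, 1:]" using assms by (simp add: VY_def)
  then show ?thesis by (simp add: one_pCons)
qed

lemma lz: assumes "L0 u * VZ + L2 w = (VZ :: 'k::comm_ring_1 R4)" shows "u = 1"
proof -
  have "[:w, [:[:u:]:]:] = [:w:] + [:0,1:] * [:[:[:u:]:]:]" by simp
  then have "L3 [:w, [:[:u:]:]:] = L0 u * VZ + L2 w" by (simp only: L_simps L_const VZ_def algebra_simps)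
  then have "L3 [:w, [:[:u:]:]:] = L3 [:0, 1:]" using assms by (simp add: VZ_def)
  then show ?thesis by (simp add: one_pCons)
qed

lemma lw: assumes "L0 u * VW + L3 w = (VW :: 'k::comm_ring_1 R4)" shows "u = 1"
  using assms by (simp add: L0_def L3_def VW_def one_pCons)

lemma sq1: assumes two: "(2::'k::field) = 0" and "l * l = 1" shows "l = (1::'k)"
proof -
  have "(l + 1) * (l + 1) = l * l + 2 * l + 1" by (simp add: algebra_simps)
  also have "\<dots> = 1 + 1" using assms by simp
  also have "\<dots> = 0" using two by simp
  finally have "l + 1 = 0" by simp
  then have "l = - 1" by (simp add: eq_neg_iff_add_eq_0)
  also have "- 1 = (1::'k)" using two_zero_add[OF two, of 1] by (simp add: eq_neg_iff_add_eq_0)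
  finally show ?thesis .
qed

lemma classify:
  assumes two: "(2::'k::field) = 0" and tr: "triangular (\<tau> :: 'k R4 \<Rightarrow> 'k R4)" and inv: "involution \<tau>"
  shows "Conc \<tau>"
proof -
  have T: "kalg_aut \<tau>" using tr by (simp add: triangular_def)
  have k: "fixk \<tau>" using T by (rule kalg_aut_fixk)
  have hT: "rhom \<tau>" using k by (simp add: fixk_def)
  obtain l1 l2 l3 l4 p1 p2 p3 p4 where
    h: "\<tau> VX = L0 l1 * VX + L0 p1" "\<tau> VY = L0 l2 * VY + L1 p2"
       "\<tau> VZ = L0 l3 * VZ + L2 p3" "\<tau> VW = L0 l4 * VW + L3 p4"
    using tr unfolding triangular_def by blast
  have L0c: "\<And>c. \<tau> (L0 c) = L0 c" using k by (simp add: fixk_def)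
  have tt: "\<tau> (\<tau> x) = x" for x using invol_app[OF inv] .
  have "VX = \<tau> (\<tau> VX)" by (simp add: tt)
  also have "\<dots> = L0 (l1 * l1) * VX + L0 (l1 * p1 + p1)"
    by (simp add: h(1) rhom_add[OF hT] rhom_mult[OF hT] L0c L_simps algebra_simps)
  finally have "l1 * l1 = 1" using lx by metis
  then have l1: "l1 = 1" by (rule sq1[OF two])
  have hx: "\<tau> VX = L1 [:p1, 1:]" using h(1) by (simp add: l1 Lpc L_simps add.commute)
  have "\<tau> (L1 p2) \<in> range L1" using fixk_gen[OF k, of "L1 p2"] hx
    by (simp add: subst4_L e1_closed)
  then obtain w2 where w2: "\<tau> (L1 p2) = L1 w2" by blast
  have "VY = \<tau> (\<tau> VY)" by (simp add: tt)
  also have "\<dots> = L0 (l2 * l2) * VY + L1 ([:l2:] * p2 + w2)"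
    using h(2) by (simp add: rhom_add[OF hT] rhom_mult[OF hT] L0c L_simps w2 L_const L_smult algebra_simps)
  finally have "l2 * l2 = 1" using ly by metis
  then have l2: "l2 = 1" by (rule sq1[OF two])
  have hy: "\<tau> VY \<in> range L2" using h(2) by (simp add: l2 L_simps V_in range_add[OF rhom_L2] L1_in)
  have hx2: "\<tau> VX \<in> range L2" using hx by (simp add: L1_in)
  have "\<tau> (L2 p3) \<in> range L2" using fixk_gen[OF k, of "L2 p3"] hx2 hy
    by (simp add: subst4_L e2_closed2)
  then obtain w3 where w3: "\<tau> (L2 p3) = L2 w3" by blast
  have "VZ = \<tau> (\<tau> VZ)" by (simp add: tt)
  also have "\<dots> = L0 (l3 * l3) * VZ + L2 ([:[:l3:]:] * p3 + w3)"
    using h(3) by (simp add: rhom_add[OF hT] rhom_mult[OF hT] L0c L_simps w3 L_const L_smult algebra_simps)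
  finally have "l3 * l3 = 1" using lz by metis
  then have l3: "l3 = 1" by (rule sq1[OF two])
  have hy3: "\<tau> VY \<in> range L3" using h(2) by (simp add: l2 L_simps V_in range_add[OF rhom_L3] L1_in)
  have hx3: "\<tau> VX \<in> range L3" using hx by (simp add: L1_in)
  have hz3: "\<tau> VZ \<in> range L3" using h(3) by (simp add: l3 L_simps V_in range_add[OF rhom_L3] L2_in)
  have "\<tau> (L3 p4) \<in> range L3" using fixk_gen[OF k, of "L3 p4"] hx3 hy3 hz3
    by (simp add: subst4_L e3_closed3)
  then obtain w4 where w4: "\<tau> (L3 p4) = L3 w4" by blast
  have "VW = \<tau> (\<tau> VW)" by (simp add: tt)
  also have "\<dots> = L0 (l4 * l4) * VW + L3 ([:[:[:l4:]:]:] * p4 + w4)"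
    using h(4) by (simp add: rhom_add[OF hT] rhom_mult[OF hT] L0c L_simps w4 L_const L_smult algebra_simps)
  finally have "l4 * l4 = 1" using lw by metis
  then have l4: "l4 = 1" by (rule sq1[OF two])
  have h': "\<tau> VX = VX + L0 p1" "\<tau> VY = VY + L1 p2" "\<tau> VZ = VZ + L2 p3" "\<tau> VW = VW + L3 p4"
    using h l1 l2 l3 l4 by (simp_all add: L_simps)
  show ?thesis
  proof (cases "p1 = 0")
    case True
    then show ?thesis using classify0[OF two T inv _ h'(2-4)] h'(1) by (simp add: L_simps)
  next
    case False
    then show ?thesis by (rule cNZ[OF two T inv h'])
  qed
qed

theorem mainTheorem1:
  assumes "CHAR('k::field) = 2"
  shows "(\<forall>T :: 'k R4 \<Rightarrow> 'k R4. kalg_aut T \<and> (form_i T \<or> form_ii T \<or> form_iii T)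
            \<longrightarrow> involution T) \<and>
         (\<forall>\<tau> :: 'k R4 \<Rightarrow> 'k R4. triangular \<tau> \<longrightarrow>
            (involution \<tau> \<longleftrightarrow>
             (\<exists>\<phi> T. kalg_aut \<phi> \<and> triangular T \<and> (form_i T \<or> form_ii T \<or> form_iii T) \<and>
                     \<tau> = \<phi> \<circ> T \<circ> inv \<phi>)))"
proof -
  have two: "(2::'k) = 0" using of_nat_CHAR[where 'a='k] assms by simp
  show ?thesis
    using part1[OF two] classify[OF two] conc_invol[OF two] unfolding Conc_def by blast
qed


end
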